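(* Let $A\in\mathcal{A}_{n,1}$ and $(N,E)=\Lambda(A)$. Then $-\ell(N)\le B(A)\le c(N)$.
   Context: An alternating sign matrix (ASM) of order $n$ is an $n\times n$ matrix $A=(a_{ij})$ with entries in $\{-1,0,1\}$ such that in every row and every column the nonzero entries alternate in sign, the first and the last nonzero entries being $1$. $\mathcal{A}_{n,s}$ denotes the set of order-$n$ ASMs having exactly $s$ entries equal to $-1$ (so $\mathcal{A}_{n,0}$ is the set of $n\times n$ permutation matrices). For an ASM $A=(a_{ij})$, $\overline{A}=(a_{i,n+1-j})$ is the vertical reflection of $A$. Let $A\in\mathcal{A}_{n,1}$. The opening column is the column containing the unique $-1$; the closing row is the row containing the $-1$; the opening row is the row of the $1$ of the opening column lying above the $-1$. The columns strictly to the left (resp. right) of the opening column form the left side (resp. right side). The closing row contains exactly two $1$'s, one in each side; the one in the right side is the closing $1$ and its column is the closing column. The rows strictly between the opening row and the closing row are the enclosed rows. $A$ is neutral if there are no enclosed rows; otherwise $A$ is positive if the $1$ of the lowest enclosed row lies in the right side, and negative if it lies in the left side. $\mathcal{A}_{n,1}^{+},\mathcal{A}_{n,1}^{0},\mathcal{A}_{n,1}^{-}$ denote the sets of positive, neutral, negative elements of $\mathcal{A}_{n,1}$; $A$ is negative iff $\overline{A}$ is positive. For $A\in\mathcal{A}_{n,1}^{+}\cup\mathcal{A}_{n,1}^{0}$: the charged cell is the intersection of the enclosed rows with the right side; the extended neutral cell is the intersection of the rows from the opening row to the closing row (inclusive) with the left side. The leading $1$ is the highest $1$ in the left side strictly below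 the opening row; its column is the leading column; the leading cell consists of the entries strictly below the opening row and strictly between the leading column and the opening column, and $\ell(A)$ is the sum of its entries. The closing cell consists of the entries strictly below the closing row and strictly between the opening column and the closing column, and $c(A)$ is the sum of its entries; the extended closing cell consists of the entries strictly below the closing row in the columns from the opening column to the closing column inclusive. Parameters: if $A$ is positive, $E(A)$ is the sum of the entries of the charged cell; if $A$ is neutral, $E(A)=0$; if $A$ is negative, $E(A)=-E(\overline{A})$. For $A\in\mathcal{A}_{n,1}^{+}\cup\mathcal{A}_{n,1}^{0}$, $B(A)=c(A)-\ell(A)$; for $A\in\mathcal{A}_{n,1}^{-}$, $B(A)=-B(\overline{A})$. Horizontal displacement: for an $m\times q$ $(0,1)$-matrix $P$ whose nonzero columns are $j_1<\dots<j_t$ with $j_1=1$ and $j_t<q$, $H(P)$ is the $m\times q$ matrix whose column $j_{s+1}$ equals column $j_s$ of $P$ for $1\le s\le t$ (where $j_{t+1}=q$), all other columns being zero. Vertical displacement: for an $m\times q$ $(0,1)$-matrix $P$ whose nonzero rows are $i_1<\dots<i_t$ with $i_1>1$ and $i_t=m$, $V(P)$ is the $m\times q$ matrix whose row $i_{s-1}$ equals row $i_s$ of $P$ for $1\le s\le t$ (where $i_0=1$), all other rows being zero. Partial discharging procedure: for $A\in\mathcal{A}_{n,1}^{+}\cup\mathcal{A}_{n,1}^{0}$, $\delta(A)$ is obtained by applying successively the following steps (all cells, rows and columns referring to the positions they occupy in $A$): (1) replace the $-1$ and the closing $1$ by $0$; (2) replace the submatrix occupying the extended closing cell by its image under $H$;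 (3) replace the submatrix occupying the extended neutral cell by its image under $V$; (4) lower the entries of the extended neutral cell and of the charged cell by one row: in the left side, for each row $t$ strictly below the opening row up to and including the closing row, the left part of row $t$ becomes the former left part of row $t-1$, and the left part of the opening row becomes zero; in the right side, for each row $t$ from two rows below the opening row up to and including the closing row, the right part of row $t$ becomes the former right part of row $t-1$, and the right part of the row immediately below the opening row becomes zero. The complete discharging procedure is $\Delta(A)=(k,\delta(A),c(A),E(A))$, where $k$ is the index of the opening row of $A$. It is known that $\Delta$ is injective on $\mathcal{A}_{n,1}^{+}\cup\mathcal{A}_{n,1}^{0}$, and that whenever $\Delta(A)=(k,P,c,E)$, there is a unique $N\in\mathcal{A}_{n,1}^{+}\cup\mathcal{A}_{n,1}^{0}$ with $\Delta(N)=(k,P,c+E,0)$, and this $N$ is neutral. Neutralizing procedure $\Lambda$: for $A\in\mathcal{A}_{n,1}^{+}\cup\mathcal{A}_{n,1}^{0}$ with $\Delta(A)=(k,P,c,E)$, $\Lambda(A)=(N,E)$ where $N$ is the unique element with $\Delta(N)=(k,P,c+E,0)$. For $A\in\mathcal{A}_{n,1}^{-}$, write $\Lambda(\overline{A})=(M,-E)$ and set $\Lambda(A)=(\overline{M},E)$. *)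

theory Defs
  imports Main
begin

text \<open>Matrices of order n are functions nat => nat => int, indexed by 1..n,
  and zero outside {1..n} x {1..n}.\<close>

type_synonym mat = "nat \<Rightarrow> nat \<Rightarrow> int"

definition alternating :: "int list \<Rightarrow> bool" where
  "alternating xs \<longleftrightarrow> xs \<noteq> [] \<and> hd xs = 1 \<and> last xs = 1 \<and>
     (\<forall>k. Suc k < length xs \<longrightarrow> xs ! Suc k = - (xs ! k))"

definition is_asm :: "nat \<Rightarrow> mat \<Rightarrow> bool" where
  "is_asm n A \<longleftrightarrow>
     (\<forall>i j. \<not> (1 \<le> i \<and> i \<le> n \<and> 1 \<le> j \<and> j \<le> n) \<longrightarrow> A i j = 0) \<and>
     (\<forall>i j. A i j \<in> {-1, 0, 1}) \<and>
     (\<forall>i\<in>{1..n}. alternating [A i j. j \<leftarrow> [1..<n+1], A i j \<noteq> 0]) \<and>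
     (\<forall>j\<in>{1..n}. alternating [A i j. i \<leftarrow> [1..<n+1], A i j \<noteq> 0])"

definition asm_s :: "nat \<Rightarrow> nat \<Rightarrow> mat \<Rightarrow> bool" where
  "asm_s n s A \<longleftrightarrow> is_asm n A \<and>
     card {(i, j). i \<in> {1..n} \<and> j \<in> {1..n} \<and> A i j = -1} = s"

abbreviation asm1 :: "nat \<Rightarrow> mat \<Rightarrow> bool" where
  "asm1 n A \<equiv> asm_s n 1 A"

definition refl :: "nat \<Rightarrow> mat \<Rightarrow> mat" where
  "refl n A = (\<lambda>i j. if 1 \<le> j \<and> j \<le> n then A i (n + 1 - j) else 0)"

definition neg_pos :: "mat \<Rightarrow> nat \<times> nat" where
  "neg_pos A = (THE p. A (fst p) (snd p) = -1)"

definition closing_row :: "mat \<Rightarrow> nat" where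
  "closing_row A = fst (neg_pos A)"

definition opening_col :: "mat \<Rightarrow> nat" where
  "opening_col A = snd (neg_pos A)"

definition opening_row :: "mat \<Rightarrow> nat" where
  "opening_row A = (THE i. i < closing_row A \<and> A i (opening_col A) = 1)"

definition closing_col :: "mat \<Rightarrow> nat" where
  "closing_col A = (THE j. opening_col A < j \<and> A (closing_row A) j = 1)"

definition neutral :: "nat \<Rightarrow> mat \<Rightarrow> bool" where
  "neutral n A \<longleftrightarrow> asm1 n A \<and> Suc (opening_row A) = closing_row A"

definition positive :: "nat \<Rightarrow> mat \<Rightarrow> bool" where
  "positive n A \<longleftrightarrow> asm1 n A \<and> Suc (opening_row A) < closing_row A \<and>
     (\<exists>j. opening_col A < j \<and> j \<le> n \<and> A (closing_row A - 1) j = 1)"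

definition negative :: "nat \<Rightarrow> mat \<Rightarrow> bool" where
  "negative n A \<longleftrightarrow> asm1 n A \<and> Suc (opening_row A) < closing_row A \<and>
     (\<exists>j. 1 \<le> j \<and> j < opening_col A \<and> A (closing_row A - 1) j = 1)"

definition leading_row :: "mat \<Rightarrow> nat" where
  "leading_row A = (LEAST i. opening_row A < i \<and>
      (\<exists>j. 1 \<le> j \<and> j < opening_col A \<and> A i j = 1))"

definition leading_col :: "mat \<Rightarrow> nat" where
  "leading_col A = (THE j. 1 \<le> j \<and> j < opening_col A \<and> A (leading_row A) j = 1)"

definition ell :: "nat \<Rightarrow> mat \<Rightarrow> int" where
  "ell n A = (\<Sum>i\<in>{opening_row A<..n}. \<Sum>j\<in>{leading_col A<..<opening_col A}. A i j)"

definition cval :: "nat \<Rightarrow> mat \<Rightarrow> int" where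
  "cval n A = (\<Sum>i\<in>{closing_row A<..n}. \<Sum>j\<in>{opening_col A<..<closing_col A}. A i j)"

definition charge :: "nat \<Rightarrow> mat \<Rightarrow> int" where
  "charge n A = (\<Sum>i\<in>{opening_row A<..<closing_row A}. \<Sum>j\<in>{opening_col A<..n}. A i j)"

definition Epar :: "nat \<Rightarrow> mat \<Rightarrow> int" where
  "Epar n A = (if positive n A then charge n A
               else if neutral n A then 0
               else - charge n (refl n A))"

definition Bpar :: "nat \<Rightarrow> mat \<Rightarrow> int" where
  "Bpar n A = (if negative n A then - (cval n (refl n A) - ell n (refl n A))
               else cval n A - ell n A)"

text \<open>Partial discharging procedure; all positions refer to the original A.\<close>
definition dstep1 :: "mat \<Rightarrow> mat \<Rightarrow> mat" where
  "dstep1 A M = (\<lambda>i j. if i = closing_row A \<and> (j = opening_col A \<or> j = closing_col A)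
                         then 0 else M i j)"

definition dstep2 :: "nat \<Rightarrow> mat \<Rightarrow> mat \<Rightarrow> mat" where
  "dstep2 n A M = (let r = closing_row A; c0 = opening_col A; cc = closing_col A;
      S = {j \<in> {c0..cc}. \<exists>i\<in>{r<..n}. M i j \<noteq> 0} in
      (\<lambda>i j. if r < i \<and> i \<le> n \<and> c0 \<le> j \<and> j \<le> cc then
               (if (j \<in> S \<or> j = cc) \<and> (\<exists>s\<in>S. s < j)
                then M i (GREATEST s. s \<in> S \<and> s < j) else 0)
             else M i j))"

definition dstep3 :: "mat \<Rightarrow> mat \<Rightarrow> mat" where
  "dstep3 A M = (let r = closing_row A; c0 = opening_col A; k = opening_row A;
      T = {i \<in> {k..r}. \<exists>j\<in>{1..<c0}. M i j \<noteq> 0} in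
      (\<lambda>i j. if k \<le> i \<and> i \<le> r \<and> 1 \<le> j \<and> j < c0 then
               (if (i = k \<or> i \<in> T) \<and> (\<exists>t\<in>T. i < t)
                then M (LEAST t. t \<in> T \<and> i < t) j else 0)
             else M i j))"

definition dstep4 :: "nat \<Rightarrow> mat \<Rightarrow> mat \<Rightarrow> mat" where
  "dstep4 n A M = (let r = closing_row A; c0 = opening_col A; k = opening_row A in
      (\<lambda>i j. if 1 \<le> j \<and> j < c0 \<and> k \<le> i \<and> i \<le> r then
               (if i = k then 0 else M (i - 1) j)
             else if c0 < j \<and> j \<le> n \<and> k + 1 \<le> i \<and> i \<le> r then
               (if i = k + 1 then 0 else M (i - 1) j)
             else M i j))"

definition delta :: "nat \<Rightarrow> mat \<Rightarrow> mat" where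
  "delta n A = dstep4 n A (dstep3 A (dstep2 n A (dstep1 A A)))"

definition Delta :: "nat \<Rightarrow> mat \<Rightarrow> nat \<times> mat \<times> int \<times> int" where
  "Delta n A = (opening_row A, delta n A, cval n A, Epar n A)"

definition Lambda_pn :: "nat \<Rightarrow> mat \<Rightarrow> mat \<times> int" where
  "Lambda_pn n A = (case Delta n A of (k, P, c, e) \<Rightarrow>
      ((THE N. (positive n N \<or> neutral n N) \<and> Delta n N = (k, P, c + e, 0)), e))"

definition Lambda :: "nat \<Rightarrow> mat \<Rightarrow> mat \<times> int" where
  "Lambda n A = (if negative n A then
      (case Lambda_pn n (refl n A) of (M, e) \<Rightarrow> (refl n M, - e))
    else Lambda_pn n A)"

end

theory Submission
  imports Defs
begin

lemma listcomp_eq: "[f j. j \<leftarrow> L, P j] = map f (filter P L)"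
  by (induction L) auto

lemma alt_nth:
  assumes "alternating xs" "p < length xs"
  shows "xs ! p = (-1) ^ p"
  using assms(2)
proof (induction p)
  case 0
  then show ?case using assms(1) by (auto simp: alternating_def hd_conv_nth)
next
  case (Suc p)
  then have "xs ! Suc p = - (xs ! p)" using assms(1) by (auto simp: alternating_def)
  then show ?case using Suc by auto
qed

lemma alt_last_even:
  assumes "alternating xs"
  shows "even (length xs - 1)"
proof -
  have ne: "xs \<noteq> []" using assms by (auto simp: alternating_def)
  have "last xs = xs ! (length xs - 1)" using ne by (simp add: last_conv_nth)
  also have "\<dots> = (-1) ^ (length xs - 1)" using ne by (intro alt_nth[OF assms]) auto
  finally have "(-1::int) ^ (length xs - 1) = 1" using assms by (auto simp: alternating_def)
  then show ?thesis by (metis neg_one_odd_power one_neq_neg_one)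
qed

definition nzl :: "nat \<Rightarrow> (nat \<Rightarrow> int) \<Rightarrow> nat list" where
  "nzl n f = filter (\<lambda>j. f j \<noteq> 0) [1..<n+1]"

lemma nzl_sorted: "sorted_wrt (<) (nzl n f)"
  unfolding nzl_def by (rule sorted_wrt_filter) (rule sorted_wrt_upt)

lemma nzl_set: "set (nzl n f) = {j. 1 \<le> j \<and> j \<le> n \<and> f j \<noteq> 0}"
  unfolding nzl_def by auto

lemma row_one:
  assumes alt: "alternating (map f (nzl n f))" and nm: "\<forall>j. f j \<noteq> -1"
  shows "\<exists>j0. 1 \<le> j0 \<and> j0 \<le> n \<and> f j0 = 1 \<and> (\<forall>j. 1 \<le> j \<and> j \<le> n \<and> j \<noteq> j0 \<longrightarrow> f j = 0)"
proof -
  let ?J = "nzl n f"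
  have ne: "?J \<noteq> []" using alt by (auto simp: alternating_def)
  have len: "length ?J = 1"
  proof (rule ccontr)
    assume "length ?J \<noteq> 1"
    then have "1 < length ?J" using ne by (cases ?J) auto
    then have "map f ?J ! 1 = -1" using alt_nth[OF alt, of 1] by simp
    then show False using nm \<open>1 < length ?J\<close> by auto
  qed
  then obtain j0 where J: "?J = [j0]" by (cases ?J) (auto simp: length_Suc_conv)
  then have "j0 \<in> set ?J" by simp
  then have j0: "1 \<le> j0" "j0 \<le> n" "f j0 \<noteq> 0" by (auto simp: nzl_set)
  have "hd (map f ?J) = 1" using alt by (auto simp: alternating_def)
  then have "f j0 = 1" using J by simp
  moreover have "\<forall>j. 1 \<le> j \<and> j \<le> n \<and> j \<noteq> j0 \<longrightarrow> f j = 0"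
  proof (intro allI impI, rule ccontr)
    fix j assume "1 \<le> j \<and> j \<le> n \<and> j \<noteq> j0" "f j \<noteq> 0"
    then have "j \<in> set ?J" by (auto simp: nzl_set)
    then show False using J \<open>1 \<le> j \<and> j \<le> n \<and> j \<noteq> j0\<close> by simp
  qed
  ultimately show ?thesis using j0 by blast
qed

lemma row_three:
  assumes alt: "alternating (map f (nzl n f))" and fo: "f oc = -1" "1 \<le> oc" "oc \<le> n"
    and nm: "\<forall>j. j \<noteq> oc \<longrightarrow> f j \<noteq> -1"
  shows "\<exists>b c. 1 \<le> b \<and> b < oc \<and> oc < c \<and> c \<le> n \<and> f b = 1 \<and> f c = 1 \<and>
     (\<forall>j. 1 \<le> j \<and> j \<le> n \<and> j \<noteq> b \<and> j \<noteq> oc \<and> j \<noteq> c \<longrightarrow> f j = 0)"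
proof -
  let ?J = "nzl n f"
  have oin: "oc \<in> set ?J" using fo by (auto simp: nzl_set)
  have odd_only: "\<And>q. q < length ?J \<Longrightarrow> odd q \<Longrightarrow> ?J ! q = oc"
  proof (rule ccontr)
    fix q assume q: "q < length ?J" "odd q" "?J ! q \<noteq> oc"
    have "map f ?J ! q = -1" using alt_nth[OF alt, of q] q by simp
    then show False using nm q by auto
  qed
  have dist: "distinct ?J" using nzl_sorted[of n f] by (simp add: strict_sorted_iff)
  have "length ?J = 3"
  proof -
    obtain p where p: "p < length ?J" "?J ! p = oc" using oin by (auto simp: in_set_conv_nth)
    have "map f ?J ! p = -1" using p fo by simp
    then have "odd p" using alt_nth[OF alt, of p] p by (auto)
    have ev: "even (length ?J - 1)" using alt_last_even[OF alt] by simp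
    have "length ?J \<ge> 2" using p \<open>odd p\<close> by (cases p) auto
    have "length ?J \<le> 3"
    proof (rule ccontr)
      assume "\<not> length ?J \<le> 3"
      then have "?J ! 1 = oc" "?J ! 3 = oc" using odd_only by auto
      then show False using dist \<open>\<not> length ?J \<le> 3\<close> nth_eq_iff_index_eq[OF dist, of 1 3] by simp
    qed
    then show ?thesis using ev \<open>length ?J \<ge> 2\<close> by (cases "length ?J = 2") auto
  qed
  then obtain b oc' c where J: "?J = [b, oc', c]"
    by (cases ?J; cases "tl ?J"; cases "tl (tl ?J)") (auto simp: length_Suc_conv numeral_3_eq_3)
  have "oc' = oc" using odd_only[of 1] J by auto
  have srt: "b < oc'" "oc' < c" using nzl_sorted[of n f] J by auto
  have hd: "f b = 1" using alt J by (auto simp: alternating_def)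
  have lst: "f c = 1" using alt J by (auto simp: alternating_def)
  have bset: "b \<in> set ?J" "c \<in> set ?J" using J by auto
  then have "1 \<le> b" "c \<le> n" by (auto simp: nzl_set)
  moreover have "\<forall>j. 1 \<le> j \<and> j \<le> n \<and> j \<noteq> b \<and> j \<noteq> oc \<and> j \<noteq> c \<longrightarrow> f j = 0"
  proof (intro allI impI, rule ccontr)
    fix j assume a: "1 \<le> j \<and> j \<le> n \<and> j \<noteq> b \<and> j \<noteq> oc \<and> j \<noteq> c" "f j \<noteq> 0"
    then have "j \<in> set ?J" by (auto simp: nzl_set)
    then show False using J a \<open>oc' = oc\<close> by auto
  qed
  ultimately show ?thesis using srt hd lst \<open>oc' = oc\<close> by blast
qed


definition struct1 :: "nat \<Rightarrow> mat \<Rightarrow> nat \<Rightarrow> nat \<Rightarrow> nat \<Rightarrow> nat \<Rightarrow> nat \<Rightarrow> nat \<Rightarrow> bool" where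
 "struct1 n A k r oc b cc d \<longleftrightarrow>
  1 \<le> k \<and> k < r \<and> r < d \<and> d \<le> n \<and> 1 \<le> b \<and> b < oc \<and> oc < cc \<and> cc \<le> n \<and>
  (\<forall>i j. \<not>(1\<le>i \<and> i\<le>n \<and> 1\<le>j \<and> j\<le>n) \<longrightarrow> A i j = 0) \<and>
  A r oc = -1 \<and> A r b = 1 \<and> A r cc = 1 \<and> A k oc = 1 \<and> A d oc = 1 \<and>
  (\<forall>j. j\<noteq>b \<and> j\<noteq>oc \<and> j\<noteq>cc \<longrightarrow> A r j = 0) \<and> (\<forall>i. i\<noteq>k \<and> i\<noteq>r \<and> i\<noteq>d \<longrightarrow> A i oc = 0) \<and>
  (\<forall>i. 1\<le>i \<and> i\<le>n \<and> i\<noteq>r \<longrightarrow> (\<exists>j. A i j = 1 \<and> (\<forall>j'. j'\<noteq>j \<longrightarrow> A i j' = 0))) \<and>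
  (\<forall>j. 1\<le>j \<and> j\<le>n \<and> j\<noteq>oc \<longrightarrow> (\<exists>i. A i j = 1 \<and> (\<forall>i'. i'\<noteq>i \<longrightarrow> A i' j = 0)))"

lemma asm_row_alt:
  assumes "is_asm n A" "1 \<le> i" "i \<le> n"
  shows "alternating (map (A i) (nzl n (A i)))"
proof -
  from assms(1) have "\<forall>i\<in>{1..n}. alternating [A i j. j \<leftarrow> [1..<n+1], A i j \<noteq> 0]"
    by (simp add: is_asm_def del: upt_Suc)
  then have "alternating [A i j. j \<leftarrow> [1..<n+1], A i j \<noteq> 0]" using assms(2,3) by (simp del: upt_Suc)
  then show ?thesis by (simp add: listcomp_eq nzl_def del: upt_Suc)
qed

lemma asm_col_alt:
  assumes "is_asm n A" "1 \<le> j" "j \<le> n"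
  shows "alternating (map (\<lambda>i. A i j) (nzl n (\<lambda>i. A i j)))"
proof -
  from assms(1) have "\<forall>j\<in>{1..n}. alternating [A i j. i \<leftarrow> [1..<n+1], A i j \<noteq> 0]"
    by (simp add: is_asm_def del: upt_Suc)
  then have "alternating [A i j. i \<leftarrow> [1..<n+1], A i j \<noteq> 0]" using assms(2,3) by (simp del: upt_Suc)
  then show ?thesis by (simp add: listcomp_eq nzl_def del: upt_Suc)
qed

lemma asm1_struct:
  assumes "asm1 n A"
  shows "\<exists>k r oc b cc d. struct1 n A k r oc b cc d"
proof -
  have asm: "is_asm n A" using assms by (simp add: asm_s_def)
  have out: "\<forall>i j. \<not>(1\<le>i \<and> i\<le>n \<and> 1\<le>j \<and> j\<le>n) \<longrightarrow> A i j = 0"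
    using asm unfolding is_asm_def by (rule conjunct1)
  have "card {(i, j). i \<in> {1..n} \<and> j \<in> {1..n} \<and> A i j = -1} = 1"
    using assms unfolding asm_s_def by (rule conjunct2)
  then obtain p where p: "{(i, j). i \<in> {1..n} \<and> j \<in> {1..n} \<and> A i j = -1} = {p}"
    by (rule card_1_singletonE)
  obtain r oc where pr: "p = (r, oc)" by (cases p)
  have "(r, oc) \<in> {(i, j). i \<in> {1..n} \<and> j \<in> {1..n} \<and> A i j = -1}" using p pr by simp
  then have roc: "1 \<le> r" "r \<le> n" "1 \<le> oc" "oc \<le> n" "A r oc = -1" by auto
  have uniq: "\<And>i j. A i j = -1 \<Longrightarrow> i = r \<and> j = oc"
  proof -
    fix i j assume a: "A i j = -1"
    have "1\<le>i \<and> i\<le>n \<and> 1\<le>j \<and> j\<le>n"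
    proof (rule ccontr)
      assume "\<not> (1\<le>i \<and> i\<le>n \<and> 1\<le>j \<and> j\<le>n)"
      then have "A i j = 0" using out by blast
      then show False using a by simp
    qed
    then have "(i, j) \<in> {(i, j). i \<in> {1..n} \<and> j \<in> {1..n} \<and> A i j = -1}" using a by auto
    then show "i = r \<and> j = oc" using p pr by auto
  qed
  obtain b cc where bc: "1 \<le> b" "b < oc" "oc < cc" "cc \<le> n" "A r b = 1" "A r cc = 1"
    "\<forall>j. 1 \<le> j \<and> j \<le> n \<and> j \<noteq> b \<and> j \<noteq> oc \<and> j \<noteq> cc \<longrightarrow> A r j = 0"
  proof -
    have "\<forall>j. j \<noteq> oc \<longrightarrow> A r j \<noteq> -1" using uniq by blast
    from row_three[OF asm_row_alt[OF asm roc(1,2)] roc(5) roc(3) roc(4) this]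
    show ?thesis using that by blast
  qed
  obtain k d where kd: "1 \<le> k" "k < r" "r < d" "d \<le> n" "A k oc = 1" "A d oc = 1"
    "\<forall>i. 1 \<le> i \<and> i \<le> n \<and> i \<noteq> k \<and> i \<noteq> r \<and> i \<noteq> d \<longrightarrow> A i oc = 0"
  proof -
    have "\<forall>i. i \<noteq> r \<longrightarrow> A i oc \<noteq> -1" using uniq by blast
    from row_three[of "\<lambda>i. A i oc", OF asm_col_alt[OF asm roc(3,4)] roc(5) roc(1) roc(2) this]
    show ?thesis using that by blast
  qed
  have rows: "\<forall>i. 1\<le>i \<and> i\<le>n \<and> i\<noteq>r \<longrightarrow> (\<exists>j. A i j = 1 \<and> (\<forall>j'. j'\<noteq>j \<longrightarrow> A i j' = 0))"
  proof (intro allI impI)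
    fix i assume i: "1\<le>i \<and> i\<le>n \<and> i\<noteq>r"
    obtain j0 where "1 \<le> j0" "j0 \<le> n" "A i j0 = 1" "\<forall>j. 1 \<le> j \<and> j \<le> n \<and> j \<noteq> j0 \<longrightarrow> A i j = 0"
    proof -
      have "\<forall>j. A i j \<noteq> -1" using uniq i by blast
      from row_one[OF asm_row_alt[OF asm, of i] this] i show ?thesis using that by blast
    qed
    then show "\<exists>j. A i j = 1 \<and> (\<forall>j'. j'\<noteq>j \<longrightarrow> A i j' = 0)" using out by metis
  qed
  have cols: "\<forall>j. 1\<le>j \<and> j\<le>n \<and> j\<noteq>oc \<longrightarrow> (\<exists>i. A i j = 1 \<and> (\<forall>i'. i'\<noteq>i \<longrightarrow> A i' j = 0))"
  proof (intro allI impI)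
    fix j assume j: "1\<le>j \<and> j\<le>n \<and> j\<noteq>oc"
    obtain i0 where "1 \<le> i0" "i0 \<le> n" "A i0 j = 1" "\<forall>i. 1 \<le> i \<and> i \<le> n \<and> i \<noteq> i0 \<longrightarrow> A i j = 0"
    proof -
      have "\<forall>i. A i j \<noteq> -1" using uniq j by blast
      from row_one[of "\<lambda>i. A i j", OF asm_col_alt[OF asm, of j] this] j show ?thesis using that by blast
    qed
    then show "\<exists>i. A i j = 1 \<and> (\<forall>i'. i'\<noteq>i \<longrightarrow> A i' j = 0)" using out by metis
  qed
  have r0: "\<forall>j. j\<noteq>b \<and> j\<noteq>oc \<and> j\<noteq>cc \<longrightarrow> A r j = 0"
    using bc(7) out roc by blast
  have c0: "\<forall>i. i\<noteq>k \<and> i\<noteq>r \<and> i\<noteq>d \<longrightarrow> A i oc = 0"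
    using kd(7) out roc by blast
  have "struct1 n A k r oc b cc d"
    unfolding struct1_def
    using kd(1-6) bc(1-6) roc(5) rows cols out r0 c0 by blast
  then show ?thesis by blast
qed


context
  fixes n :: nat and A :: mat and k r oc b cc d :: nat
  assumes S: "struct1 n A k r oc b cc d"
begin

lemma s1: "1 \<le> k" "k < r" "r < d" "d \<le> n" "1 \<le> b" "b < oc" "oc < cc" "cc \<le> n"
  "A r oc = -1" "A r b = 1" "A r cc = 1" "A k oc = 1" "A d oc = 1"
  using S unfolding struct1_def by blast+

lemma s1_out: "\<not>(1\<le>i \<and> i\<le>n \<and> 1\<le>j \<and> j\<le>n) \<Longrightarrow> A i j = 0"
  using S unfolding struct1_def by blast

lemma s1_out': "i = 0 \<or> n < i \<or> j = 0 \<or> n < j \<Longrightarrow> A i j = 0"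
  using s1_out by auto

lemma s1_rowr: "j\<noteq>b \<Longrightarrow> j\<noteq>oc \<Longrightarrow> j\<noteq>cc \<Longrightarrow> A r j = 0"
  using S unfolding struct1_def by blast

lemma s1_colo: "i\<noteq>k \<Longrightarrow> i\<noteq>r \<Longrightarrow> i\<noteq>d \<Longrightarrow> A i oc = 0"
  using S unfolding struct1_def by blast

lemma s1_row: "1\<le>i \<Longrightarrow> i\<le>n \<Longrightarrow> i\<noteq>r \<Longrightarrow> \<exists>j. A i j = 1 \<and> (\<forall>j'. j'\<noteq>j \<longrightarrow> A i j' = 0)"
  using S unfolding struct1_def by blast

lemma s1_col: "1\<le>j \<Longrightarrow> j\<le>n \<Longrightarrow> j\<noteq>oc \<Longrightarrow> \<exists>i. A i j = 1 \<and> (\<forall>i'. i'\<noteq>i \<longrightarrow> A i' j = 0)"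
  using S unfolding struct1_def by blast

lemma s1_cases: "(i = r \<and> j = oc) \<or> A i j = 0 \<or> A i j = 1"
proof (cases "i = r")
  case True
  then show ?thesis using s1(10,11) s1_rowr by (cases "j = b \<or> j = oc \<or> j = cc") auto
next
  case False
  show ?thesis
  proof (cases "j = oc")
    case True
    then show ?thesis using s1(12,13) s1_colo False by (cases "i = k \<or> i = d") auto
  next
    case F2: False
    show ?thesis
    proof (cases "1\<le>i \<and> i\<le>n")
      case True
      then obtain j0 where "A i j0 = 1" "\<forall>j'. j'\<noteq>j0 \<longrightarrow> A i j' = 0" using s1_row False by blast
      then show ?thesis by (cases "j = j0") auto
    next
      case F3: False
      then show ?thesis using s1_out by blast
    qed
  qed
qed

lemma s1_neg_iff: "A i j = -1 \<longleftrightarrow> (i = r \<and> j = oc)"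
  using s1_cases[of i j] s1(9) by auto

lemma s1_01: "(i, j) \<noteq> (r, oc) \<Longrightarrow> A i j = 0 \<or> A i j = 1"
  using s1_cases[of i j] by auto

lemma s1_ge0: "(i, j) \<noteq> (r, oc) \<Longrightarrow> 0 \<le> A i j"
proof -
  assume "(i, j) \<noteq> (r, oc)"
  then have "A i j = 0 \<or> A i j = 1" by (rule s1_01)
  then show ?thesis by auto
qed

lemma s1_le1: "A i j \<le> 1"
  using s1_cases[of i j] s1(9) by auto

lemma s1_neg_pos: "neg_pos A = (r, oc)"
  unfolding neg_pos_def by (rule the_equality) (auto simp: s1_neg_iff)

lemma s1_closing_row: "closing_row A = r"
  by (simp add: closing_row_def s1_neg_pos)

lemma s1_opening_col: "opening_col A = oc"
  by (simp add: opening_col_def s1_neg_pos)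

lemma s1_opening_row: "opening_row A = k"
  unfolding opening_row_def s1_closing_row s1_opening_col
proof (rule the_equality)
  show "k < r \<and> A k oc = 1" using s1 by simp
next
  fix i assume "i < r \<and> A i oc = 1"
  then show "i = k" using s1_colo[of i] s1 by (cases "i = k") auto
qed

lemma s1_closing_col: "closing_col A = cc"
  unfolding closing_col_def s1_closing_row s1_opening_col
proof (rule the_equality)
  show "oc < cc \<and> A r cc = 1" using s1 by simp
next
  fix j assume "oc < j \<and> A r j = 1"
  then show "j = cc" using s1_rowr[of j] s1 by (cases "j = cc") auto
qed

end

lemma nzl_single:
  assumes "\<And>j. (1\<le>j \<and> j\<le>n \<and> f j \<noteq> 0) \<longleftrightarrow> j = x"
  shows "nzl n f = [x]"
proof -
  have st: "set (nzl n f) = {x}" using assms by (auto simp: nzl_set)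
  have "distinct (nzl n f)" using nzl_sorted[of n f] by (simp add: strict_sorted_iff)
  then have "length (nzl n f) = 1" using st by (metis card.empty card_insert_disjoint distinct_card empty_iff finite.emptyI One_nat_def)
  then obtain y where "nzl n f = [y]" by (auto simp: length_Suc_conv)
  then show ?thesis using st by auto
qed

lemma nzl_three:
  assumes "\<And>j. (1\<le>j \<and> j\<le>n \<and> f j \<noteq> 0) \<longleftrightarrow> (j = x \<or> j = y \<or> j = z)" "x < y" "y < z"
  shows "nzl n f = [x, y, z]"
proof -
  have st: "set (nzl n f) = {x, y, z}" using assms by (auto simp: nzl_set)
  have srt: "sorted_wrt (<) (nzl n f)" by (rule nzl_sorted)
  then have "distinct (nzl n f)" by (simp add: strict_sorted_iff)
  then have "length (nzl n f) = 3" using st assms(2,3) by (simp add: distinct_card[symmetric])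
  then obtain p q s where l: "nzl n f = [p, q, s]"
    by (auto simp: length_Suc_conv numeral_3_eq_3)
  then have "p < q" "q < s" using srt by auto
  moreover have "{p, q, s} = {x, y, z}" using st l by simp
  moreover note eq = this
  have m: "x \<in> {p,q,s}" "z \<in> {p,q,s}" "p \<in> {x,y,z}" "q \<in> {x,y,z}" "s \<in> {x,y,z}"
    using eq by auto
  have "p = x" using m(1,3) \<open>p < q\<close> \<open>q < s\<close> assms(2,3) by auto
  moreover have "s = z" using m(2,5) \<open>p < q\<close> \<open>q < s\<close> assms(2,3) by auto
  moreover have "q = y" using m(4) \<open>p < q\<close> \<open>q < s\<close> \<open>p = x\<close> \<open>s = z\<close> by auto
  ultimately show ?thesis using l by simp
qed

lemma listcomp_nzl: "[f j. j \<leftarrow> [1..<n+1], f j \<noteq> 0] = map f (nzl n f)"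
  by (simp add: listcomp_eq nzl_def del: upt_Suc)

lemma alt1: "alternating [1]"
  by (simp add: alternating_def)

lemma alt3: "alternating [1, -1, 1]"
proof -
  have "\<forall>k. Suc k < 3 \<longrightarrow> [1::int, -1, 1] ! Suc k = - ([1::int, -1, 1] ! k)"
  proof (intro allI impI)
    fix k :: nat assume "Suc k < 3"
    then have "k = 0 \<or> k = 1" by auto
    then show "[1::int, -1, 1] ! Suc k = - ([1::int, -1, 1] ! k)" by auto
  qed
  then show ?thesis by (simp add: alternating_def)
qed

lemma struct1_asm1:
  assumes S: "struct1 n A k r oc b cc d"
  shows "asm1 n A"
proof -
  note s = s1[OF S]
  have out: "\<forall>i j. \<not>(1\<le>i \<and> i\<le>n \<and> 1\<le>j \<and> j\<le>n) \<longrightarrow> A i j = 0" using s1_out[OF S] by blast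
  have vals: "\<forall>i j. A i j \<in> {-1, 0, 1}" using s1_cases[OF S] s by fastforce
  have rows: "\<forall>i\<in>{1..n}. alternating [A i j. j \<leftarrow> [1..<n+1], A i j \<noteq> 0]"
  proof
    fix i assume i: "i \<in> {1..n}"
    show "alternating [A i j. j \<leftarrow> [1..<n+1], A i j \<noteq> 0]"
    proof (cases "i = r")
      case True
      have "nzl n (A i) = [b, oc, cc]"
      proof (rule nzl_three)
        fix j show "(1\<le>j \<and> j\<le>n \<and> A i j \<noteq> 0) \<longleftrightarrow> (j = b \<or> j = oc \<or> j = cc)"
          using True s s1_rowr[OF S, of j] by auto
      qed (use s in auto)
      then show ?thesis unfolding listcomp_nzl using True s alt3 by simp
    next
      case False
      obtain j0 where j0: "A i j0 = 1" "\<forall>j'. j'\<noteq>j0 \<longrightarrow> A i j' = 0" using s1_row[OF S, of i] i False by auto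
      have "1 \<le> j0 \<and> j0 \<le> n" using j0(1) s1_out[OF S, of i j0] by fastforce
      have "nzl n (A i) = [j0]"
        by (rule nzl_single) (use j0 \<open>1 \<le> j0 \<and> j0 \<le> n\<close> in auto)
      then show ?thesis unfolding listcomp_nzl using j0 alt1 by simp
    qed
  qed
  have cols: "\<forall>j\<in>{1..n}. alternating [A i j. i \<leftarrow> [1..<n+1], A i j \<noteq> 0]"
  proof
    fix j assume j: "j \<in> {1..n}"
    show "alternating [A i j. i \<leftarrow> [1..<n+1], A i j \<noteq> 0]"
    proof (cases "j = oc")
      case True
      have "nzl n (\<lambda>i. A i j) = [k, r, d]"
      proof (rule nzl_three)
        fix i show "(1\<le>i \<and> i\<le>n \<and> A i j \<noteq> 0) \<longleftrightarrow> (i = k \<or> i = r \<or> i = d)"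
          using True s s1_colo[OF S, of i] by auto
      qed (use s in auto)
      then show ?thesis unfolding listcomp_nzl using True s alt3 by simp
    next
      case False
      obtain i0 where i0: "A i0 j = 1" "\<forall>i'. i'\<noteq>i0 \<longrightarrow> A i' j = 0" using s1_col[OF S, of j] j False by auto
      have "1 \<le> i0 \<and> i0 \<le> n" using i0(1) s1_out[OF S, of i0 j] by fastforce
      have "nzl n (\<lambda>i. A i j) = [i0]"
        by (rule nzl_single) (use i0 \<open>1 \<le> i0 \<and> i0 \<le> n\<close> in auto)
      then show ?thesis unfolding listcomp_nzl using i0 alt1 by simp
    qed
  qed
  have "{(i, j). i \<in> {1..n} \<and> j \<in> {1..n} \<and> A i j = -1} = {(r, oc)}"
    using s1_neg_iff[OF S] s by auto
  then have card: "card {(i, j). i \<in> {1..n} \<and> j \<in> {1..n} \<and> A i j = -1} = 1" by simp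
  have "is_asm n A" unfolding is_asm_def using out vals rows cols by blast
  then show ?thesis using card by (simp add: asm_s_def)
qed


definition prv :: "nat set \<Rightarrow> nat \<Rightarrow> nat" where
  "prv X j = (GREATEST s. s \<in> X \<and> s < j)"

definition nxt :: "nat set \<Rightarrow> nat \<Rightarrow> nat" where
  "nxt Y j = (LEAST u. u \<in> Y \<and> j < u)"

lemma prv_prop:
  assumes "s \<in> X" "s < j"
  shows "prv X j \<in> X" "prv X j < j" "\<And>t. t \<in> X \<Longrightarrow> t < j \<Longrightarrow> t \<le> prv X j"
proof -
  have b: "\<forall>y. y \<in> X \<and> y < j \<longrightarrow> y \<le> j" by auto
  have "prv X j \<in> X \<and> prv X j < j"
    unfolding prv_def by (rule GreatestI_nat[of _ s j]) (use assms b in auto)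
  then show "prv X j \<in> X" "prv X j < j" by auto
  fix t assume "t \<in> X" "t < j"
  then show "t \<le> prv X j" unfolding prv_def by (intro Greatest_le_nat[of _ t j]) auto
qed

lemma nxt_prop:
  assumes "u \<in> Y" "j < u"
  shows "nxt Y j \<in> Y" "j < nxt Y j" "nxt Y j \<le> u" "\<And>t. t \<in> Y \<Longrightarrow> j < t \<Longrightarrow> nxt Y j \<le> t"
proof -
  have "nxt Y j \<in> Y \<and> j < nxt Y j" unfolding nxt_def by (rule LeastI[of _ u]) (use assms in auto)
  then show "nxt Y j \<in> Y" "j < nxt Y j" by auto
  show "nxt Y j \<le> u" unfolding nxt_def by (rule Least_le) (use assms in auto)
  fix t assume "t \<in> Y" "j < t"
  then show "nxt Y j \<le> t" unfolding nxt_def by (intro Least_le) auto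
qed

locale GLs =
  fixes X Y :: "nat set" and m c :: nat
  assumes mX: "m \<in> X" and Xb: "\<And>s. s \<in> X \<Longrightarrow> m \<le> s \<and> s < c"
    and YX: "\<And>u. m < u \<Longrightarrow> u \<le> c \<Longrightarrow> (u \<in> Y \<longleftrightarrow> u \<in> X \<or> u = c)"
begin

lemma mc: "m < c" using Xb[OF mX] by simp

lemma cY: "c \<in> Y" using YX[of c] mc by simp

lemma GL1:
  assumes j: "j \<in> X"
  shows "nxt Y j \<in> Y" "j < nxt Y j" "nxt Y j \<le> c" "prv X (nxt Y j) = j"
proof -
  have jc: "j < c" "m \<le> j" using Xb[OF j] by auto
  note nv = nxt_prop[OF cY jc(1)]
  show "nxt Y j \<in> Y" "j < nxt Y j" "nxt Y j \<le> c" using nv by auto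
  let ?v = "nxt Y j"
  note pv = prv_prop[OF j nv(2)]
  have "prv X ?v \<ge> j" using pv(3)[OF j nv(2)] .
  moreover have "\<not> prv X ?v > j"
  proof
    assume g: "prv X ?v > j"
    have "prv X ?v \<in> Y" using YX[of "prv X ?v"] pv(1,2) g jc nv(3) by auto
    then have "?v \<le> prv X ?v" using nv(4) g by blast
    then show False using pv(2) by simp
  qed
  ultimately show "prv X ?v = j" by simp
qed

lemma GL2:
  assumes u: "u \<in> Y" "m < u" "u \<le> c"
  shows "prv X u \<in> X" "prv X u < u" "nxt Y (prv X u) = u"
proof -
  note pv = prv_prop[OF mX u(2)]
  show "prv X u \<in> X" "prv X u < u" using pv by auto
  let ?p = "prv X u"
  note nv = nxt_prop[OF u(1) pv(2)]
  have "\<not> nxt Y ?p < u"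
  proof
    assume l: "nxt Y ?p < u"
    have "m \<le> ?p" using Xb[OF pv(1)] by simp
    then have "nxt Y ?p \<in> X" using YX[of "nxt Y ?p"] nv(1,2) l u by auto
    then have "nxt Y ?p \<le> ?p" using pv(3) l by blast
    then show False using nv(2) by simp
  qed
  then show "nxt Y ?p = u" using nv(3) by simp
qed

lemma GL2_inj:
  assumes "u1 \<in> Y" "m < u1" "u1 \<le> c" "u2 \<in> Y" "m < u2" "u2 \<le> c" "prv X u1 = prv X u2"
  shows "u1 = u2"
  using GL2(3)[of u1] GL2(3)[of u2] assms by metis

end

lemma card_less_ex1:
  fixes U :: "nat set"
  assumes fin: "finite U" and c: "c < card U"
  shows "\<exists>!u. u \<in> U \<and> card {x\<in>U. x<u} = c"
proof -
  define \<phi> where "\<phi> u = card {x\<in>U. x<u}" for u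
  have mono: "\<phi> u < \<phi> v" if "u \<in> U" "v \<in> U" "u < v" for u v
  proof -
    have "{x\<in>U. x<u} \<subseteq> {x\<in>U. x<v}" using that by auto
    moreover have "u \<in> {x\<in>U. x<v}" "u \<notin> {x\<in>U. x<u}" using that by auto
    ultimately have "{x\<in>U. x<u} \<subset> {x\<in>U. x<v}" by blast
    then show ?thesis unfolding \<phi>_def by (intro psubset_card_mono) (use fin in auto)
  qed
  have inj: "inj_on \<phi> U"
  proof (rule inj_onI)
    fix u v
    assume "u \<in> U" "v \<in> U" "\<phi> u = \<phi> v"
    show "u = v"
    proof (rule ccontr)
      assume "u \<noteq> v"
      then consider "u < v" | "v < u" using linorder_neqE_nat by blast
      then show False
      proof cases
        case 1 then show False using mono[of u v] \<open>u \<in> U\<close> \<open>v \<in> U\<close> \<open>\<phi> u = \<phi> v\<close> by simp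
      next
        case 2 then show False using mono[of v u] \<open>u \<in> U\<close> \<open>v \<in> U\<close> \<open>\<phi> u = \<phi> v\<close> by simp
      qed
    qed
  qed
  have sub: "\<phi> ` U \<subseteq> {..<card U}"
  proof
    fix y assume "y \<in> \<phi> ` U"
    then obtain u where u: "u \<in> U" "y = \<phi> u" by auto
    have "{x\<in>U. x<u} \<subseteq> U" "u \<in> U" "u \<notin> {x\<in>U. x<u}" using u by auto
    then have "{x\<in>U. x<u} \<subset> U" by blast
    then have "\<phi> u < card U" unfolding \<phi>_def by (intro psubset_card_mono) (use fin in auto)
    then show "y \<in> {..<card U}" using u by simp
  qed
  have "card (\<phi> ` U) = card {..<card U}" using card_image[OF inj] by simp
  then have eq: "\<phi> ` U = {..<card U}" using card_subset_eq[OF _ sub] by simp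
  have "c \<in> \<phi> ` U" using eq c by simp
  then obtain u where u: "u \<in> U" "\<phi> u = c" by blast
  show ?thesis
  proof (rule ex1I[of _ u])
    show "u \<in> U \<and> card {x\<in>U. x<u} = c" using u by (simp add: \<phi>_def)
  next
    fix v assume v: "v \<in> U \<and> card {x\<in>U. x<v} = c"
    then have "\<phi> v = \<phi> u" using u by (simp add: \<phi>_def)
    then show "v = u" using inj_onD[OF inj] v u(1) by blast
  qed
qed

lemma sum_single:
  fixes f :: "nat \<Rightarrow> int"
  assumes "finite I" "f g = 1" "\<And>i. i \<noteq> g \<Longrightarrow> f i = 0"
  shows "(\<Sum>i\<in>I. f i) = (if g \<in> I then 1 else 0)"
proof -
  have "(\<Sum>i\<in>I. f i) = (\<Sum>i\<in>I. if i = g then 1 else 0)"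
    using assms by (intro sum.cong) auto
  also have "\<dots> = (if g \<in> I then 1 else 0)" using assms(1) by simp
  finally show ?thesis .
qed

definition perm01 :: "nat \<Rightarrow> mat \<Rightarrow> bool" where
  "perm01 n X \<longleftrightarrow> (\<forall>i j. X i j = 0 \<or> X i j = 1) \<and>
     (\<forall>i j. \<not>(1\<le>i \<and> i\<le>n \<and> 1\<le>j \<and> j\<le>n) \<longrightarrow> X i j = 0) \<and>
     (\<forall>i. 1\<le>i \<and> i\<le>n \<longrightarrow> (\<exists>j. X i j = 1)) \<and>
     (\<forall>i j1 j2. X i j1 = 1 \<longrightarrow> X i j2 = 1 \<longrightarrow> j1 = j2) \<and>
     (\<forall>j. 1\<le>j \<and> j\<le>n \<longrightarrow> (\<exists>i. X i j = 1)) \<and>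
     (\<forall>j i1 i2. X i1 j = 1 \<longrightarrow> X i2 j = 1 \<longrightarrow> i1 = i2)"

lemma perm_count:
  fixes X :: mat
  assumes v: "\<And>i j. X i j = 0 \<or> X i j = 1"
    and out: "\<And>i j. \<not>(1\<le>i \<and> i\<le>n \<and> 1\<le>j \<and> j\<le>n) \<Longrightarrow> X i j = 0"
    and ru: "\<And>i j1 j2. X i j1 = 1 \<Longrightarrow> X i j2 = 1 \<Longrightarrow> j1 = j2"
    and ce: "\<And>j. 1\<le>j \<Longrightarrow> j\<le>n \<Longrightarrow> \<exists>i. X i j = 1"
  shows "perm01 n X"
proof -
  define R where "R i = (\<Sum>j\<in>{1..n}. X i j)" for i
  define C where "C j = (\<Sum>i\<in>{1..n}. X i j)" for j
  have nn: "0 \<le> X i j" for i j using v[of i j] by auto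
  have R1: "R i \<le> 1" for i
  proof (cases "\<exists>j. X i j = 1")
    case True
    then obtain j0 where j0: "X i j0 = 1" by auto
    have "\<And>j. j \<noteq> j0 \<Longrightarrow> X i j = 0" using ru j0 v by metis
    then have "R i = (if j0 \<in> {1..n} then 1 else 0)" unfolding R_def by (intro sum_single) (use j0 in auto)
    then show ?thesis by simp
  next
    case False
    then have "\<And>j. X i j = 0" using v by metis
    then show ?thesis unfolding R_def by simp
  qed
  have C1: "C j \<ge> 1" if jj: "1 \<le> j" "j \<le> n" for j
  proof -
    obtain i where i: "X i j = 1" using ce[OF jj] by blast
    then have "1\<le>i \<and> i\<le>n" using out[of i j] by fastforce
    then have "X i j \<le> C j" unfolding C_def using nn
      by (intro member_le_sum) auto
    then show ?thesis using i by simp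
  qed
  have swap: "(\<Sum>i\<in>{1..n}. R i) = (\<Sum>j\<in>{1..n}. C j)"
    unfolding R_def C_def by (rule sum.swap)
  have s1: "(\<Sum>i\<in>{1..n}. 1 - R i) = int n - (\<Sum>i\<in>{1..n}. R i)"
    by (simp add: sum_subtractf)
  have s2: "(\<Sum>j\<in>{1..n}. C j - 1) = (\<Sum>j\<in>{1..n}. C j) - int n"
    by (simp add: sum_subtractf)
  have a1: "(\<Sum>i\<in>{1..n}. 1 - R i) \<ge> 0" using R1 by (intro sum_nonneg) auto
  have a2: "(\<Sum>j\<in>{1..n}. C j - 1) \<ge> 0" proof (intro sum_nonneg)
    fix j assume "j \<in> {1..n}"
    then show "0 \<le> C j - 1" using C1[of j] by simp
  qed
  have z1: "(\<Sum>i\<in>{1..n}. 1 - R i) = 0" using a1 a2 s1 s2 swap by linarith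
  have z2: "(\<Sum>j\<in>{1..n}. C j - 1) = 0" using a1 a2 s1 s2 swap by linarith
  have Reach: "R i = 1" if "i \<in> {1..n}" for i
    using z1 R1 sum_nonneg_eq_0_iff[of "{1..n}" "\<lambda>i. 1 - R i"] that by auto
  have Ceach: "C j = 1" if jn: "j \<in> {1..n}" for j
  proof -
    have "\<forall>x\<in>{1..n}. 0 \<le> C x - 1"
    proof
      fix x assume "x \<in> {1..n}"
      then show "0 \<le> C x - 1" using C1[of x] by simp
    qed
    then have "\<forall>x\<in>{1..n}. C x - 1 = 0" using z2 sum_nonneg_eq_0_iff[of "{1..n}" "\<lambda>j. C j - 1"] by auto
    then show ?thesis using jn by auto
  qed
  have rex: "\<forall>i. 1\<le>i \<and> i\<le>n \<longrightarrow> (\<exists>j. X i j = 1)"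
  proof (intro allI impI)
    fix i assume i: "1\<le>i \<and> i\<le>n"
    show "\<exists>j. X i j = 1"
    proof (rule ccontr)
      assume "\<not> ?thesis"
      then have "\<And>j. X i j = 0" using v by metis
      then have "R i = 0" unfolding R_def by simp
      then show False using Reach[of i] i by simp
    qed
  qed
  have cu: "\<forall>j i1 i2. X i1 j = 1 \<longrightarrow> X i2 j = 1 \<longrightarrow> i1 = i2"
  proof (intro allI impI, rule ccontr)
    fix j i1 i2 assume a: "X i1 j = 1" "X i2 j = 1" "i1 \<noteq> i2"
    have r: "1\<le>i1 \<and> i1\<le>n \<and> 1\<le>j \<and> j\<le>n" "1\<le>i2 \<and> i2\<le>n" using out[of i1 j] out[of i2 j] a by fastforce+
    have "(\<Sum>i\<in>{i1,i2}. X i j) \<le> C j" unfolding C_def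
      by (rule sum_mono2) (use r nn in auto)
    then show False using a Ceach[of j] r by simp
  qed
  show ?thesis unfolding perm01_def using v out rex ru ce cu by blast
qed


locale sA =
  fixes n :: nat and A :: mat and k r oc b cc d :: nat
  assumes S: "struct1 n A k r oc b cc d"
begin

lemmas s = s1[OF S]
lemmas cr = s1_closing_row[OF S]
lemmas oco = s1_opening_col[OF S]
lemmas orw = s1_opening_row[OF S]
lemmas ccl = s1_closing_col[OF S]

lemma kn: "k \<le> n" "r \<le> n" "oc \<le> n" "1 \<le> oc" "1 \<le> r" using s by auto

lemma out: "\<not>(1\<le>i \<and> i\<le>n \<and> 1\<le>j \<and> j\<le>n) \<Longrightarrow> A i j = 0"
  using s1_out[OF S] by blast

lemma one_in: "A i j = 1 \<Longrightarrow> 1\<le>i \<and> i\<le>n \<and> 1\<le>j \<and> j\<le>n"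
  using out[of i j] by fastforce

lemma nz1: "A i j \<noteq> 0 \<Longrightarrow> (i, j) \<noteq> (r, oc) \<Longrightarrow> A i j = 1"
  using s1_01[OF S, of i j] by auto

lemma nz1': "A i j \<noteq> 0 \<Longrightarrow> j \<noteq> oc \<Longrightarrow> A i j = 1"
  using nz1 by blast

lemma ge0: "j \<noteq> oc \<Longrightarrow> 0 \<le> A i j"
  using s1_ge0[OF S, of i j] by auto

lemma rowu: "i \<noteq> r \<Longrightarrow> A i j1 = 1 \<Longrightarrow> A i j2 = 1 \<Longrightarrow> j1 = j2"
proof -
  assume a: "i \<noteq> r" "A i j1 = 1" "A i j2 = 1"
  then have "1 \<le> i" "i \<le> n" using one_in by auto
  then obtain j where "A i j = 1" "\<forall>j'. j'\<noteq>j \<longrightarrow> A i j' = 0" using s1_row[OF S] a(1) by blast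
  then show "j1 = j2" using a by (metis zero_neq_one)
qed

lemma colu: "j \<noteq> oc \<Longrightarrow> A i1 j = 1 \<Longrightarrow> A i2 j = 1 \<Longrightarrow> i1 = i2"
proof -
  assume a: "j \<noteq> oc" "A i1 j = 1" "A i2 j = 1"
  then have "1 \<le> j" "j \<le> n" using one_in by auto
  then obtain i where "A i j = 1" "\<forall>i'. i'\<noteq>i \<longrightarrow> A i' j = 0" using s1_col[OF S] a(1) by blast
  then show "i1 = i2" using a by (metis zero_neq_one)
qed

lemma rowr1: "A r j = 1 \<longleftrightarrow> j = b \<or> j = cc"
proof (cases "j = b \<or> j = oc \<or> j = cc")
  case True then show ?thesis using s by auto
next
  case False then show ?thesis using s1_rowr[OF S, of j] by auto
qed

lemma colo1: "A i oc = 1 \<longleftrightarrow> i = k \<or> i = d"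
proof (cases "i = k \<or> i = r \<or> i = d")
  case True then show ?thesis using s by auto
next
  case False then show ?thesis using s1_colo[OF S, of i] by auto
qed

lemma rowk: "A k j = (if j = oc then 1 else 0)"
proof -
  have "k \<noteq> r" using s by simp
  obtain j0 where "A k j0 = 1" "\<forall>j'. j'\<noteq>j0 \<longrightarrow> A k j' = 0" using s1_row[OF S, of k] s kn by auto
  moreover have "j0 = oc" using rowu[of k j0 oc] \<open>k \<noteq> r\<close> calculation s by auto
  ultimately show ?thesis by auto
qed

lemma colcc: "A i cc = (if i = r then 1 else 0)"
proof -
  have "cc \<noteq> oc" using s by simp
  obtain i0 where "A i0 cc = 1" "\<forall>i'. i'\<noteq>i0 \<longrightarrow> A i' cc = 0" using s1_col[OF S, of cc] s kn by auto
  moreover have "i0 = r" using colu[of cc i0 r] \<open>cc \<noteq> oc\<close> calculation s by auto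
  ultimately show ?thesis by auto
qed

lemma left_u: "j1 < oc \<Longrightarrow> j2 < oc \<Longrightarrow> A i j1 = 1 \<Longrightarrow> A i j2 = 1 \<Longrightarrow> j1 = j2"
proof -
  assume a: "j1 < oc" "j2 < oc" "A i j1 = 1" "A i j2 = 1"
  show "j1 = j2"
  proof (cases "i = r")
    case True
    then show ?thesis using a rowr1 s by auto
  next
    case False
    then show ?thesis using rowu a by blast
  qed
qed

definition SS where "SS = {j \<in> {oc..cc}. \<exists>i\<in>{r<..n}. A i j \<noteq> 0}"
definition TT where "TT = {i \<in> {k..r}. \<exists>j\<in>{1..<oc}. A i j \<noteq> 0}"

lemma SS_iff: "j \<in> SS \<longleftrightarrow> oc \<le> j \<and> j \<le> cc \<and> (\<exists>i. r < i \<and> A i j = 1)"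
proof
  assume "j \<in> SS"
  then obtain i where "oc \<le> j" "j \<le> cc" "r < i" "i \<le> n" "A i j \<noteq> 0" by (auto simp: SS_def)
  then show "oc \<le> j \<and> j \<le> cc \<and> (\<exists>i. r < i \<and> A i j = 1)" using nz1[of i j] by auto
next
  assume "oc \<le> j \<and> j \<le> cc \<and> (\<exists>i. r < i \<and> A i j = 1)"
  then obtain i where "oc \<le> j" "j \<le> cc" "r < i" "A i j = 1" by auto
  then show "j \<in> SS" using one_in[of i j] by (auto simp: SS_def intro!: bexI[of _ i])
qed

lemma TT_iff: "i \<in> TT \<longleftrightarrow> k \<le> i \<and> i \<le> r \<and> (\<exists>j. 1 \<le> j \<and> j < oc \<and> A i j = 1)"
proof
  assume "i \<in> TT"
  then obtain j where "k \<le> i" "i \<le> r" "1 \<le> j" "j < oc" "A i j \<noteq> 0" by (auto simp: TT_def)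
  then show "k \<le> i \<and> i \<le> r \<and> (\<exists>j. 1 \<le> j \<and> j < oc \<and> A i j = 1)" using nz1'[of i j] by auto
next
  assume "k \<le> i \<and> i \<le> r \<and> (\<exists>j. 1 \<le> j \<and> j < oc \<and> A i j = 1)"
  then obtain j where "k \<le> i" "i \<le> r" "1 \<le> j" "j < oc" "A i j = 1" by blast
  then show "i \<in> TT" by (auto simp: TT_def intro!: bexI[of _ j])
qed

lemma ocSS: "oc \<in> SS" using SS_iff s by auto
lemma ccSS: "cc \<notin> SS" using SS_iff colcc by auto
lemma SSb: "j \<in> SS \<Longrightarrow> oc \<le> j \<and> j < cc" using SS_iff ccSS by (cases "j = cc") auto
lemma rTT: "r \<in> TT" using TT_iff s by auto
lemma kTT: "k \<notin> TT" using TT_iff rowk by auto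
lemma TTb: "i \<in> TT \<Longrightarrow> k < i \<and> i \<le> r" using TT_iff kTT by (cases "i = k") auto

sublocale G: GLs SS "insert cc SS" oc cc
  by unfold_locales (use ocSS SSb in auto)

lemma nT: "k \<le> i \<Longrightarrow> i < r \<Longrightarrow> nxt TT i \<in> TT \<and> i < nxt TT i \<and> (\<forall>t\<in>TT. i < t \<longrightarrow> nxt TT i \<le> t)"
  using nxt_prop[OF rTT, of i] by auto

definition M1 where "M1 = (\<lambda>i j. if i = r \<and> (j = oc \<or> j = cc) then 0 else A i j)"
definition M2 where "M2 = (\<lambda>i j. if r<i \<and> i\<le>n \<and> oc\<le>j \<and> j\<le>cc then (if (j \<in> SS \<or> j = cc) \<and> oc < j then A i (prv SS j) else 0) else M1 i j)"
definition M3 where "M3 = (\<lambda>i j. if k \<le> i \<and> i \<le> r \<and> 1 \<le> j \<and> j < oc then (if (i = k \<or> i \<in> TT) \<and> i < r then A (nxt TT i) j else 0) else M2 i j)"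

lemma d1: "dstep1 A A = M1"
  by (simp add: dstep1_def cr oco ccl M1_def)

lemma SS_M1: "{j \<in> {oc..cc}. \<exists>i\<in>{r<..n}. M1 i j \<noteq> 0} = SS"
  unfolding SS_def M1_def by auto

lemma exS: "oc \<le> j \<Longrightarrow> (\<exists>s\<in>SS. s < j) \<longleftrightarrow> oc < j"
  using ocSS SSb by (auto intro: le_less_trans)

lemma M1_low: "i \<noteq> r \<Longrightarrow> M1 i j = A i j"
  by (simp add: M1_def)

lemma d2: "dstep2 n A M1 = M2"
proof (rule ext, rule ext)
  fix i j
  show "dstep2 n A M1 i j = M2 i j"
  proof (cases "r<i \<and> i\<le>n \<and> oc\<le>j \<and> j\<le>cc")
    case True
    have e: "(\<exists>s\<in>SS. s < j) \<longleftrightarrow> oc < j" using exS True by simp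
    have m: "M1 i (prv SS j) = A i (prv SS j)" using True by (simp add: M1_def)
    have "dstep2 n A M1 i j = (if (j\<in>SS \<or> j=cc) \<and> (\<exists>s\<in>SS. s<j) then M1 i (prv SS j) else 0)"
      using True unfolding dstep2_def Let_def cr oco ccl SS_M1 prv_def by simp
    also have "\<dots> = M2 i j" using True unfolding e m M2_def by simp
    finally show ?thesis .
  next
    case False
    have "dstep2 n A M1 i j = M1 i j"
      unfolding dstep2_def Let_def cr oco ccl by (simp only: if_not_P[OF False])
    also have "\<dots> = M2 i j" unfolding M2_def by (simp only: if_not_P[OF False])
    finally show ?thesis .
  qed
qed

lemma M2_up: "i \<le> r \<Longrightarrow> j < oc \<Longrightarrow> M2 i j = A i j"
  using s by (simp add: M2_def M1_def)

lemma TT_M2: "{i \<in> {k..r}. \<exists>j\<in>{1..<oc}. M2 i j \<noteq> 0} = TT"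
  unfolding TT_def
proof (rule Collect_cong)
  fix x
  show "(x \<in> {k..r} \<and> (\<exists>j\<in>{1..<oc}. M2 x j \<noteq> 0)) = (x \<in> {k..r} \<and> (\<exists>j\<in>{1..<oc}. A x j \<noteq> 0))"
  proof (cases "x \<in> {k..r}")
    case True
    have "(\<exists>j\<in>{1..<oc}. M2 x j \<noteq> 0) = (\<exists>j\<in>{1..<oc}. A x j \<noteq> 0)"
      by (rule bex_cong) (use True M2_up in auto)
    then show ?thesis by simp
  qed blast
qed

lemma exT: "k \<le> i \<Longrightarrow> (\<exists>t\<in>TT. i < t) \<longleftrightarrow> i < r"
  using rTT TTb by (auto intro: less_le_trans)

lemma d3: "dstep3 A M2 = M3"
proof (rule ext, rule ext)
  fix i j
  show "dstep3 A M2 i j = M3 i j"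
  proof (cases "k \<le> i \<and> i \<le> r \<and> 1 \<le> j \<and> j < oc")
    case True
    have e: "(\<exists>t\<in>TT. i < t) \<longleftrightarrow> i < r" using exT True by simp
    have m: "i < r \<Longrightarrow> M2 (nxt TT i) j = A (nxt TT i) j" using True nT[of i] TTb M2_up by auto
    have "dstep3 A M2 i j = (if (i = k \<or> i \<in> TT) \<and> (\<exists>t\<in>TT. i < t) then M2 (nxt TT i) j else 0)"
      using True unfolding dstep3_def Let_def cr oco orw TT_M2 nxt_def by simp
    also have "\<dots> = M3 i j" using True m unfolding e M3_def by auto
    finally show ?thesis .
  next
    case False
    have "dstep3 A M2 i j = M2 i j"
      unfolding dstep3_def Let_def cr oco orw by (simp only: if_not_P[OF False])
    also have "\<dots> = M3 i j" unfolding M3_def by (simp only: if_not_P[OF False])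
    finally show ?thesis .
  qed
qed

definition PF where "PF = (\<lambda>i j.
   if 1 \<le> j \<and> j < oc \<and> k \<le> i \<and> i \<le> r then (if i = k then 0 else if i - 1 = k \<or> i - 1 \<in> TT then A (nxt TT (i - 1)) j else 0)
   else if oc < j \<and> j \<le> n \<and> k + 1 \<le> i \<and> i \<le> r then (if i = k + 1 then 0 else A (i - 1) j)
   else if r < i \<and> i \<le> n \<and> oc \<le> j \<and> j \<le> cc then (if (j \<in> SS \<or> j = cc) \<and> oc < j then A i (prv SS j) else 0)
   else if i = r \<and> (j = oc \<or> j = cc) then 0 else A i j)"

lemma M3_left: "k \<le> i \<Longrightarrow> i < r \<Longrightarrow> 1 \<le> j \<Longrightarrow> j < oc \<Longrightarrow>
   M3 i j = (if i = k \<or> i \<in> TT then A (nxt TT i) j else 0)"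
  unfolding M3_def by simp

lemma M3_nl: assumes "\<not>(k \<le> i \<and> i \<le> r \<and> 1 \<le> j \<and> j < oc)" shows "M3 i j = M2 i j"
  unfolding M3_def by (simp only: if_not_P[OF assms])

lemma M2_nh: assumes "\<not>(r<i \<and> i\<le>n \<and> oc\<le>j \<and> j\<le>cc)" shows "M2 i j = M1 i j"
  unfolding M2_def by (simp only: if_not_P[OF assms])

lemma delta_PF: "delta n A = PF"
proof (rule ext, rule ext)
  fix i j
  have D: "delta n A i j = (if 1 \<le> j \<and> j < oc \<and> k \<le> i \<and> i \<le> r then (if i = k then 0 else M3 (i-1) j)
     else if oc < j \<and> j \<le> n \<and> k+1 \<le> i \<and> i \<le> r then (if i = k+1 then 0 else M3 (i-1) j) else M3 i j)"
    unfolding delta_def d1 d2 d3 dstep4_def Let_def cr oco orw by simp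
  show "delta n A i j = PF i j"
  proof (cases "1 \<le> j \<and> j < oc \<and> k \<le> i \<and> i \<le> r")
    case L: True
    show ?thesis
    proof (cases "i = k")
      case True
      then show ?thesis unfolding D PF_def using L by simp
    next
      case False
      have "M3 (i-1) j = (if i-1 = k \<or> i-1 \<in> TT then A (nxt TT (i-1)) j else 0)"
        using L False by (intro M3_left) auto
      then show ?thesis unfolding D PF_def using L False by simp
    qed
  next
    case NL: False
    show ?thesis
    proof (cases "oc < j \<and> j \<le> n \<and> k + 1 \<le> i \<and> i \<le> r")
      case R: True
      show ?thesis
      proof (cases "i = k+1")
        case True
        then show ?thesis unfolding D PF_def using R NL by simp
      next
        case False
        have "M3 (i-1) j = M2 (i-1) j" using R by (intro M3_nl) auto
        also have "\<dots> = M1 (i-1) j" using R by (intro M2_nh) auto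
        also have "\<dots> = A (i-1) j" using R False by (intro M1_low) auto
        finally show ?thesis unfolding D PF_def using R NL False by simp
      qed
    next
      case NR: False
      have "M3 i j = M2 i j" using NL by (intro M3_nl) auto
      then have "delta n A i j = M2 i j" unfolding D by (simp only: if_not_P[OF NL] if_not_P[OF NR])
      also have "\<dots> = PF i j" unfolding M2_def M1_def PF_def by (simp only: if_not_P[OF NL] if_not_P[OF NR])
      finally show ?thesis .
    qed
  qed
qed

end


context sA
begin

lemma PF_L:
  assumes "1 \<le> j" "j < oc" "k < i" "i \<le> r"
  shows "PF i j = (if i - 1 = k \<or> i - 1 \<in> TT then A (nxt TT (i - 1)) j else 0)"
proof -
  have c: "1 \<le> j \<and> j < oc \<and> k \<le> i \<and> i \<le> r" using assms by auto
  have ik: "i \<noteq> k" using assms by auto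
  show ?thesis unfolding PF_def by (simp only: if_P[OF c] if_not_P[OF ik])
qed

lemma PF_Lk:
  assumes "1 \<le> j" "j < oc"
  shows "PF k j = 0"
proof -
  have c: "1 \<le> j \<and> j < oc \<and> k \<le> k \<and> k \<le> r" using assms s by auto
  show ?thesis unfolding PF_def by (simp only: if_P[OF c] if_P[OF refl])
qed

lemma PF_R:
  assumes "oc < j" "j \<le> n" "k + 1 < i" "i \<le> r"
  shows "PF i j = A (i - 1) j"
proof -
  have c0: "\<not> (1 \<le> j \<and> j < oc \<and> k \<le> i \<and> i \<le> r)" using assms by auto
  have c: "oc < j \<and> j \<le> n \<and> k + 1 \<le> i \<and> i \<le> r" using assms by auto
  have ik: "i \<noteq> k + 1" using assms by auto
  show ?thesis unfolding PF_def by (simp only: if_not_P[OF c0] if_P[OF c] if_not_P[OF ik])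
qed

lemma PF_Rk1:
  assumes "oc < j"
  shows "PF (k+1) j = 0"
proof (cases "j \<le> n")
  case True
  have c0: "\<not> (1 \<le> j \<and> j < oc \<and> k \<le> k+1 \<and> k+1 \<le> r)" using assms by auto
  have c: "oc < j \<and> j \<le> n \<and> k + 1 \<le> k+1 \<and> k+1 \<le> r" using assms True s by auto
  show ?thesis unfolding PF_def by (simp only: if_not_P[OF c0] if_P[OF c] if_P[OF refl])
next
  case False
  have c0: "\<not> (1 \<le> j \<and> j < oc \<and> k \<le> k+1 \<and> k+1 \<le> r)" using assms by auto
  have c1: "\<not> (oc < j \<and> j \<le> n \<and> k + 1 \<le> k+1 \<and> k+1 \<le> r)" using False by auto
  have c2: "\<not> (r < k+1 \<and> k+1 \<le> n \<and> oc \<le> j \<and> j \<le> cc)" using False s by auto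
  have "A (k+1) j = 0" using out False by auto
  then show ?thesis unfolding PF_def by (simp only: if_not_P[OF c0] if_not_P[OF c1] if_not_P[OF c2] if_cancel)
qed

lemma PF_H:
  assumes "r < i" "i \<le> n" "oc \<le> j" "j \<le> cc"
  shows "PF i j = (if (j \<in> SS \<or> j = cc) \<and> oc < j then A i (prv SS j) else 0)"
proof -
  have c0: "\<not> (1 \<le> j \<and> j < oc \<and> k \<le> i \<and> i \<le> r)" using assms by auto
  have c1: "\<not> (oc < j \<and> j \<le> n \<and> k + 1 \<le> i \<and> i \<le> r)" using assms by auto
  have c: "r < i \<and> i \<le> n \<and> oc \<le> j \<and> j \<le> cc" using assms by auto
  show ?thesis unfolding PF_def by (simp only: if_not_P[OF c0] if_not_P[OF c1] if_P[OF c])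
qed

lemma PF_O:
  assumes "\<not> (1 \<le> j \<and> j < oc \<and> k \<le> i \<and> i \<le> r)" "\<not> (oc < j \<and> j \<le> n \<and> k + 1 \<le> i \<and> i \<le> r)"
    "\<not> (r < i \<and> i \<le> n \<and> oc \<le> j \<and> j \<le> cc)"
  shows "PF i j = (if i = r \<and> (j = oc \<or> j = cc) then 0 else A i j)"
  unfolding PF_def by (simp only: if_not_P[OF assms(1)] if_not_P[OF assms(2)] if_not_P[OF assms(3)])

lemma PF_low: "i < k \<or> n < i \<Longrightarrow> PF i j = A i j"
proof -
  assume a: "i < k \<or> n < i"
  have c0: "\<not> (1 \<le> j \<and> j < oc \<and> k \<le> i \<and> i \<le> r)" "\<not> (oc < j \<and> j \<le> n \<and> k + 1 \<le> i \<and> i \<le> r)"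
    "\<not> (r < i \<and> i \<le> n \<and> oc \<le> j \<and> j \<le> cc)" using a s kn by auto
  have nr: "\<not> (i = r \<and> (j = oc \<or> j = cc))" using a s kn by auto
  show ?thesis unfolding PF_O[OF c0] by (rule if_not_P[OF nr])
qed

lemma PF_oc: "PF i oc = (if i = k then 1 else 0)"
proof (cases "r < i \<and> i \<le> n")
  case True
  then show ?thesis using PF_H[of i oc] s by auto
next
  case False
  have c0: "\<not> (1 \<le> oc \<and> oc < oc \<and> k \<le> i \<and> i \<le> r)" "\<not> (oc < oc \<and> oc \<le> n \<and> k + 1 \<le> i \<and> i \<le> r)"
    "\<not> (r < i \<and> i \<le> n \<and> oc \<le> oc \<and> oc \<le> cc)" using False by auto
  have "A i oc = (if i = k then 1 else 0)" if "i \<noteq> r"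
  proof -
    have "i \<noteq> d" using False s that by auto
    then show ?thesis using s1_colo[OF S, of i] s that by auto
  qed
  then show ?thesis using PF_O[OF c0] s by auto
qed

lemma PF_k: "PF k j = (if j = oc then 1 else 0)"
proof (cases "1 \<le> j \<and> j < oc")
  case True
  then show ?thesis using PF_Lk by auto
next
  case F: False
  show ?thesis
  proof (cases "j = oc")
    case True
    then show ?thesis using PF_oc by simp
  next
    case False
    have c0: "\<not> (1 \<le> j \<and> j < oc \<and> k \<le> k \<and> k \<le> r)" "\<not> (oc < j \<and> j \<le> n \<and> k + 1 \<le> k \<and> k \<le> r)"
      "\<not> (r < k \<and> k \<le> n \<and> oc \<le> j \<and> j \<le> cc)" using F s by auto
    have "\<not> (k = r \<and> (j = oc \<or> j = cc))" using s by auto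
    then show ?thesis using PF_O[OF c0] rowk False by simp
  qed
qed

lemma PF_zero_out: "\<not>(1\<le>i \<and> i\<le>n \<and> 1\<le>j \<and> j\<le>n) \<Longrightarrow> PF i j = 0"
proof -
  assume a: "\<not>(1\<le>i \<and> i\<le>n \<and> 1\<le>j \<and> j\<le>n)"
  have c0: "\<not> (1 \<le> j \<and> j < oc \<and> k \<le> i \<and> i \<le> r)" "\<not> (oc < j \<and> j \<le> n \<and> k + 1 \<le> i \<and> i \<le> r)"
    "\<not> (r < i \<and> i \<le> n \<and> oc \<le> j \<and> j \<le> cc)" using a s kn by auto
  then show ?thesis using PF_O[OF c0] out[OF a] by simp
qed

lemma PF_mid:
  assumes "k < i" "i \<le> r" "PF i j = 1"
  shows "(1 \<le> j \<and> j < oc \<and> (i - 1 = k \<or> i - 1 \<in> TT) \<and> A (nxt TT (i - 1)) j = 1) \<or>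
         (oc < j \<and> j \<le> n \<and> i \<noteq> k + 1 \<and> A (i - 1) j = 1)"
proof -
  consider "1 \<le> j \<and> j < oc" | "j = oc" | "oc < j \<and> j \<le> n" | "j = 0 \<or> n < j" by linarith
  then show ?thesis
  proof cases
    case 1
    then show ?thesis using PF_L[of j i] assms by (auto split: if_splits)
  next
    case 2
    then show ?thesis using PF_oc assms by auto
  next
    case 3
    show ?thesis
    proof (cases "i = k + 1")
      case True
      then show ?thesis using PF_Rk1[of j] 3 assms by auto
    next
      case False
      then show ?thesis using PF_R[of j i] 3 assms by auto
    qed
  next
    case 4
    then show ?thesis using PF_zero_out[of i j] assms by auto
  qed
qed

lemma PF_hi:
  assumes "r < i" "i \<le> n" "PF i j = 1"
  shows "((j < oc \<or> cc < j) \<and> A i j = 1) \<or> (oc < j \<and> j \<le> cc \<and> (j \<in> SS \<or> j = cc) \<and> A i (prv SS j) = 1)"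
proof (cases "oc \<le> j \<and> j \<le> cc")
  case True
  then show ?thesis using PF_H[of i j] assms by (auto split: if_splits)
next
  case False
  have c0: "\<not> (1 \<le> j \<and> j < oc \<and> k \<le> i \<and> i \<le> r)" "\<not> (oc < j \<and> j \<le> n \<and> k + 1 \<le> i \<and> i \<le> r)"
    "\<not> (r < i \<and> i \<le> n \<and> oc \<le> j \<and> j \<le> cc)" using False assms by auto
  have "PF i j = A i j" using PF_O[OF c0] assms by auto
  then show ?thesis using False assms by auto
qed

lemma PF_vals: "PF i j = 0 \<or> PF i j = 1"
proof -
  have A01: "\<And>i' j'. (i', j') \<noteq> (r, oc) \<Longrightarrow> A i' j' = 0 \<or> A i' j' = 1" using s1_01[OF S] by blast
  consider "1 \<le> j \<and> j < oc \<and> k \<le> i \<and> i \<le> r" | "oc < j \<and> j \<le> n \<and> k + 1 \<le> i \<and> i \<le> r"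
    | "r < i \<and> i \<le> n \<and> oc \<le> j \<and> j \<le> cc"
    | "\<not> (1 \<le> j \<and> j < oc \<and> k \<le> i \<and> i \<le> r)" "\<not> (oc < j \<and> j \<le> n \<and> k + 1 \<le> i \<and> i \<le> r)"
      "\<not> (r < i \<and> i \<le> n \<and> oc \<le> j \<and> j \<le> cc)" by blast
  then show ?thesis
  proof cases
    case 1
    show ?thesis
    proof (cases "i = k")
      case True then show ?thesis using PF_Lk 1 by auto
    next
      case False
      have "A (nxt TT (i - 1)) j = 0 \<or> A (nxt TT (i - 1)) j = 1" using A01 1 by auto
      then show ?thesis using PF_L[of j i] 1 False by auto
    qed
  next
    case 2
    show ?thesis
    proof (cases "i = k + 1")
      case True then show ?thesis using PF_Rk1 2 by auto
    next
      case False
      have "A (i - 1) j = 0 \<or> A (i - 1) j = 1" using A01 2 by auto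
      then show ?thesis using PF_R[of j i] 2 False by auto
    qed
  next
    case 3
    have "A i (prv SS j) = 0 \<or> A i (prv SS j) = 1" using A01 3 by auto
    then show ?thesis using PF_H[of i j] 3 by auto
  next
    case 4
    show ?thesis using PF_O[OF 4] A01[of i j] by auto
  qed
qed

lemma PF_rowu:
  assumes "PF i j1 = 1" "PF i j2 = 1"
  shows "j1 = j2"
proof -
  consider "i < k \<or> n < i" | "i = k" | "k < i \<and> i \<le> r" | "r < i \<and> i \<le> n" by linarith
  then show ?thesis
  proof cases
    case 1
    then have "A i j1 = 1" "A i j2 = 1" using PF_low assms by auto
    moreover have "i \<noteq> r" using 1 s kn by auto
    ultimately show ?thesis using rowu by blast
  next
    case 2
    then show ?thesis using PF_k assms by (auto split: if_splits)
  next
    case 3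
    have im: "i - 1 \<noteq> r" using 3 by auto
    note m1 = PF_mid[OF _ _ assms(1)] and m2 = PF_mid[OF _ _ assms(2)]
    show ?thesis
    proof (cases "j1 < oc")
      case True
      show ?thesis
      proof (cases "j2 < oc")
        case True
        then show ?thesis using m1 m2 3 \<open>j1 < oc\<close> left_u[of j1 j2] by auto
      next
        case False
        have l: "i - 1 = k \<or> i - 1 \<in> TT" using m1 3 \<open>j1 < oc\<close> by auto
        have rr: "oc < j2" "i \<noteq> k + 1" "A (i - 1) j2 = 1" using m2 3 False by auto
        have "i - 1 \<noteq> k" using rr(2) 3 by arith
        then have "i - 1 \<in> TT" using l by blast
        then obtain j' where "j' < oc" "A (i - 1) j' = 1" using TT_iff by blast
        then show ?thesis using rowu[OF im, of j' j2] rr by auto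
      qed
    next
      case False
      have rr: "oc < j1" "i \<noteq> k + 1" "A (i - 1) j1 = 1" using m1 3 False by auto
      show ?thesis
      proof (cases "j2 < oc")
        case True
        have l: "i - 1 = k \<or> i - 1 \<in> TT" using m2 3 True by auto
        have "i - 1 \<noteq> k" using rr(2) 3 by arith
        then have "i - 1 \<in> TT" using l by blast
        then obtain j' where "j' < oc" "A (i - 1) j' = 1" using TT_iff by blast
        then show ?thesis using rowu[OF im, of j' j1] rr by auto
      next
        case False
        have "A (i - 1) j2 = 1" using m2 3 False by auto
        then show ?thesis using rowu[OF im] rr by auto
      qed
    qed
  next
    case 4
    have ir: "i \<noteq> r" using 4 by auto
    note h1 = PF_hi[OF _ _ assms(1)] and h2 = PF_hi[OF _ _ assms(2)]
    show ?thesis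
    proof (cases "oc < j1 \<and> j1 \<le> cc")
      case T1: True
      then have a1: "j1 \<in> insert cc SS" "A i (prv SS j1) = 1" using h1 4 by auto
      show ?thesis
      proof (cases "oc < j2 \<and> j2 \<le> cc")
        case True
        then have a2: "j2 \<in> insert cc SS" "A i (prv SS j2) = 1" using h2 4 by auto
        have "prv SS j1 = prv SS j2" using rowu[OF ir] a1 a2 by blast
        then show ?thesis using G.GL2_inj[of j1 j2] a1 a2 T1 True by blast
      next
        case False
        then have "A i j2 = 1" "j2 < oc \<or> cc < j2" using h2 4 by auto
        moreover have "prv SS j1 \<in> SS" using G.GL2(1)[of j1] a1 T1 by auto
        ultimately show ?thesis using rowu[OF ir, of j2 "prv SS j1"] a1 SSb by force
      qed
    next
      case F1: False
      then have a1: "A i j1 = 1" "j1 < oc \<or> cc < j1" using h1 4 by auto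
      show ?thesis
      proof (cases "oc < j2 \<and> j2 \<le> cc")
        case True
        then have a2: "j2 \<in> insert cc SS" "A i (prv SS j2) = 1" using h2 4 by auto
        have "prv SS j2 \<in> SS" using G.GL2(1)[of j2] a2 True by auto
        then show ?thesis using rowu[OF ir, of j1 "prv SS j2"] a1 a2 SSb by force
      next
        case False
        then have "A i j2 = 1" using h2 4 by auto
        then show ?thesis using rowu[OF ir] a1 by blast
      qed
    qed
  qed
qed

end


context sA
begin

lemma PF_Hn:
  assumes "j \<in> SS" "r < i" "i \<le> n"
  shows "PF i (nxt (insert cc SS) j) = A i j"
proof -
  let ?v = "nxt (insert cc SS) j"
  have v: "?v \<in> insert cc SS" "j < ?v" "?v \<le> cc" "prv SS ?v = j" using G.GL1[OF assms(1)] by auto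
  have "oc \<le> j" using SSb[OF assms(1)] by simp
  then have ov: "oc < ?v" using v by simp
  have "PF i ?v = (if (?v \<in> SS \<or> ?v = cc) \<and> oc < ?v then A i (prv SS ?v) else 0)"
    using PF_H[of i ?v] assms ov v by simp
  also have "\<dots> = A i j" using v ov by auto
  finally show ?thesis .
qed

lemma PF_Rs:
  assumes "k < g" "g < r" "oc < j" "j \<le> n"
  shows "PF (g + 1) j = A g j"
  using PF_R[of j "g+1"] assms by simp

lemma PF_hi_out:
  assumes "r < i" "i \<le> n" "j < oc \<or> cc < j"
  shows "PF i j = A i j"
proof -
  have c0: "\<not> (1 \<le> j \<and> j < oc \<and> k \<le> i \<and> i \<le> r)" "\<not> (oc < j \<and> j \<le> n \<and> k + 1 \<le> i \<and> i \<le> r)"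
    "\<not> (r < i \<and> i \<le> n \<and> oc \<le> j \<and> j \<le> cc)" using assms by auto
  have nr: "\<not> (i = r \<and> (j = oc \<or> j = cc))" using assms by auto
  show ?thesis unfolding PF_O[OF c0] by (rule if_not_P[OF nr])
qed

lemma PF_left_ex:
  assumes "1 \<le> j" "j < oc" "g \<in> TT"
  shows "\<exists>i. PF i j = PF i j \<and> PF i j = A g j"
proof -
  have kg: "k < g" "g \<le> r" using TTb[OF assms(3)] by auto
  let ?K = "insert k TT"
  have kK: "k \<in> ?K" by simp
  note pp = prv_prop[OF kK kg(1)]
  let ?p = "prv ?K g"
  have p: "?p \<in> ?K" "?p < g" using pp by auto
  have kp: "k \<le> ?p"
  proof (cases "?p = k")
    case False
    then have "?p \<in> TT" using p(1) by blast
    then show ?thesis using TTb by fastforce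
  qed simp
  have pr: "?p < r" using p kg by simp
  note nn = nT[OF kp pr]
  have "nxt TT ?p \<le> g" using nn p(2) assms(3) by blast
  moreover have "\<not> nxt TT ?p < g"
  proof
    assume l: "nxt TT ?p < g"
    have "nxt TT ?p \<in> ?K" using nn by blast
    then have "nxt TT ?p \<le> ?p" using pp(3) l by blast
    then show False using nn by simp
  qed
  ultimately have ng: "nxt TT ?p = g" by simp
  have "PF (?p + 1) j = (if ?p + 1 - 1 = k \<or> ?p + 1 - 1 \<in> TT then A (nxt TT (?p + 1 - 1)) j else 0)"
    using PF_L[of j "?p+1"] assms kp pr by simp
  also have "\<dots> = A g j" using ng p(1) by auto
  finally show ?thesis by blast
qed

lemma PF_colH:
  assumes "j \<in> insert cc SS" "oc < j"
  shows "\<exists>i. PF i j = 1"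
proof -
  have jc: "j \<le> cc"
  proof (cases "j = cc")
    case False
    then have "j \<in> SS" using assms(1) by blast
    then show ?thesis using SSb[of j] by simp
  qed simp
  have pS: "prv SS j \<in> SS" "nxt (insert cc SS) (prv SS j) = j" using G.GL2[OF assms(1) assms(2) jc] by auto
  then obtain i where i: "r < i" "A i (prv SS j) = 1" using SS_iff by blast
  have "i \<le> n" using one_in[OF i(2)] by simp
  then have "PF i j = 1" using PF_Hn[OF pS(1) i(1)] pS(2) i(2) by simp
  then show ?thesis by blast
qed

lemma PF_colex:
  assumes "1 \<le> j" "j \<le> n"
  shows "\<exists>i. PF i j = 1"
proof (cases "j = oc")
  case True
  then show ?thesis using PF_oc by (intro exI[of _ k]) simp
next
  case False
  obtain g where g: "A g j = 1" using s1_col[OF S, of j] assms False by blast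
  have gn: "1 \<le> g" "g \<le> n" using one_in[OF g] by auto
  consider "g < k" | "g = k" | "k < g \<and> g \<le> r \<and> j < oc" | "k < g \<and> g < r \<and> oc < j" | "g = r \<and> oc < j" | "r < g"
    using False by linarith
  then show ?thesis
  proof cases
    case 1
    then show ?thesis using PF_low g by (intro exI[of _ g]) auto
  next
    case 2
    then show ?thesis using rowk[of j] g False by simp
  next
    case 3
    then have "g \<in> TT" using TT_iff g assms by auto
    then show ?thesis using PF_left_ex[of j g] 3 assms g by auto
  next
    case 4
    then show ?thesis using PF_Rs[of g j] g assms by (intro exI[of _ "g+1"]) auto
  next
    case 5
    then have jc: "j = cc" using rowr1 g s by auto
    then show ?thesis using PF_colH[of cc] s by simp
  next
    case 6
    show ?thesis
    proof (cases "j < oc \<or> cc < j")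
      case True
      then show ?thesis using PF_hi_out[of g j] 6 gn g by (intro exI[of _ g]) auto
    next
      case F2: False
      have "j \<noteq> cc" using colcc[of g] g 6 by auto
      then have "j \<in> SS" using SS_iff F2 False 6 g by auto
      then show ?thesis using PF_colH[of j] F2 False by auto
    qed
  qed
qed

lemma PF_perm: "perm01 n PF"
  by (rule perm_count) (use PF_vals PF_zero_out PF_rowu PF_colex in blast)+

lemma delta_perm: "perm01 n (delta n A)"
  using PF_perm delta_PF by simp

lemma PF_k1: "PF (k+1) j = (if 1 \<le> j \<and> j < oc then A (nxt TT k) j else 0)"
proof -
  consider "1 \<le> j \<and> j < oc" | "j = oc" | "oc < j" | "j = 0" by linarith
  then show ?thesis
  proof cases
    case 1
    then show ?thesis using PF_L[of j "k+1"] s by simp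
  next
    case 2
    then show ?thesis using PF_oc by simp
  next
    case 3
    then show ?thesis using PF_Rk1 by simp
  next
    case 4
    then show ?thesis using PF_zero_out by simp
  qed
qed

lemma lead_row: "leading_row A = nxt TT k"
  unfolding leading_row_def orw oco
proof (rule Least_equality)
  have kr: "k < r" using s by simp
  note nn = nT[OF order_refl kr]
  show "k < nxt TT k \<and> (\<exists>j\<ge>1. j < oc \<and> A (nxt TT k) j = 1)" using nn TT_iff by blast
next
  fix y assume y: "k < y \<and> (\<exists>j\<ge>1. j < oc \<and> A y j = 1)"
  have kr: "k < r" using s by simp
  note nn = nT[OF order_refl kr]
  show "nxt TT k \<le> y"
  proof (cases "y \<le> r")
    case True
    then have "y \<in> TT" using TT_iff y by auto
    then show ?thesis using nn y by blast
  next
    case False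
    then show ?thesis using TTb nn by fastforce
  qed
qed

lemma lead_col: "1 \<le> leading_col A \<and> leading_col A < oc \<and> A (nxt TT k) (leading_col A) = 1"
proof -
  have kr: "k < r" using s by simp
  note nn = nT[OF order_refl kr]
  obtain j where j: "1 \<le> j" "j < oc" "A (nxt TT k) j = 1" using nn TT_iff by blast
  have "\<exists>!j. 1 \<le> j \<and> j < oc \<and> A (nxt TT k) j = 1"
    using j left_u by blast
  then show ?thesis unfolding leading_col_def lead_row oco by (rule theI')
qed

end


definition dec_oc :: "mat \<Rightarrow> nat \<Rightarrow> nat" where
  "dec_oc P k = (THE j. P k j = 1)"

definition decU :: "nat \<Rightarrow> mat \<Rightarrow> nat \<Rightarrow> nat \<Rightarrow> nat set" where
  "decU n P k oo = {j. oo < j \<and> j \<le> n \<and> (\<exists>i. k + 1 < i \<and> P i j = 1)}"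

definition nth_el :: "nat set \<Rightarrow> nat \<Rightarrow> nat" where
  "nth_el U c = (THE u. u \<in> U \<and> card {x\<in>U. x<u} = c)"

definition decode :: "nat \<Rightarrow> nat \<Rightarrow> mat \<Rightarrow> nat \<Rightarrow> mat" where
  "decode n k P c = (let oo = dec_oc P k; U = decU n P k oo; e = nth_el U c in
    (\<lambda>i j. if k + 1 < i \<and> i \<le> n \<and> oo \<le> j \<and> j \<le> e then
              (if j = oo \<or> (j \<in> U \<and> j < e) then P i (nxt U j) else 0)
           else if i = k + 1 \<and> j = oo then -1
           else if i = k + 1 \<and> j = e then 1 else P i j))"

lemma decU_fin: "finite (decU n P k oo)"
  unfolding decU_def by (rule finite_subset[of _ "{..n}"]) auto

lemma nth_el_eq:
  assumes "finite U" "u \<in> U" "card {x\<in>U. x<u} = c"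
  shows "nth_el U c = u"
proof -
  have "{x\<in>U. x<u} \<subseteq> U" "u \<in> U" "u \<notin> {x\<in>U. x<u}" using assms by auto
  then have "{x\<in>U. x<u} \<subset> U" by blast
  then have "card {x\<in>U. x<u} < card U" by (rule psubset_card_mono[OF assms(1)])
  then have "c < card U" using assms(3) by simp
  then have ex: "\<exists>!u. u \<in> U \<and> card {x\<in>U. x<u} = c" by (rule card_less_ex1[OF assms(1)])
  show ?thesis unfolding nth_el_def by (rule the1_equality[OF ex]) (use assms in simp)
qed

lemma nth_el_prop:
  assumes "finite U" "c < card U"
  shows "nth_el U c \<in> U" "card {x\<in>U. x < nth_el U c} = c"
proof -
  have ex: "\<exists>!u. u \<in> U \<and> card {x\<in>U. x<u} = c" by (rule card_less_ex1[OF assms])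
  have "nth_el U c \<in> U \<and> card {x\<in>U. x < nth_el U c} = c" unfolding nth_el_def by (rule theI'[OF ex])
  then show "nth_el U c \<in> U" "card {x\<in>U. x < nth_el U c} = c" by auto
qed

context sA
begin

lemma colsum_reg:
  assumes "j \<noteq> oc" "A g j = 1" "finite I"
  shows "(\<Sum>i\<in>I. A i j) = (if g \<in> I then 1 else 0)"
proof (rule sum_single[of I "\<lambda>i. A i j" g])
  show "finite I" by fact
  show "A g j = 1" by fact
next
  fix i assume "i \<noteq> g"
  then have "A i j \<noteq> 1" using colu[OF assms(1)] assms(2) by blast
  then show "A i j = 0" using nz1'[of i j] assms(1) by blast
qed

lemma cval_card: "cval n A = int (card {j\<in>SS. oc < j})"
proof -
  have "cval n A = (\<Sum>i\<in>{r<..n}. \<Sum>j\<in>{oc<..<cc}. A i j)" unfolding cval_def cr oco ccl by simp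
  also have "\<dots> = (\<Sum>j\<in>{oc<..<cc}. \<Sum>i\<in>{r<..n}. A i j)" by (rule sum.swap)
  also have "\<dots> = (\<Sum>j\<in>{oc<..<cc}. if j \<in> SS then 1 else 0)"
  proof (rule sum.cong[OF refl])
    fix j assume j: "j \<in> {oc<..<cc}"
    then have jo: "j \<noteq> oc" "1 \<le> j" "j \<le> n" using s by auto
    obtain g where g: "A g j = 1" using s1_col[OF S, of j] jo by blast
    have gn: "g \<le> n" using one_in[OF g] by simp
    have "(\<Sum>i\<in>{r<..n}. A i j) = (if g \<in> {r<..n} then 1 else 0)" by (rule colsum_reg[OF jo(1) g]) simp
    moreover have "g \<in> {r<..n} \<longleftrightarrow> j \<in> SS"
    proof
      assume "g \<in> {r<..n}" then show "j \<in> SS" using SS_iff j g by auto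
    next
      assume "j \<in> SS"
      then obtain i where "r < i" "A i j = 1" using SS_iff by blast
      then have "i = g" using colu[OF jo(1)] g by blast
      then show "g \<in> {r<..n}" using \<open>r < i\<close> gn by simp
    qed
    ultimately show "(\<Sum>i\<in>{r<..n}. A i j) = (if j \<in> SS then 1 else 0)" by simp
  qed
  also have "\<dots> = int (card ({oc<..<cc} \<inter> SS))"
    by (simp add: sum.inter_restrict[symmetric])
  also have "{oc<..<cc} \<inter> SS = {j\<in>SS. oc < j}" using SSb by auto
  finally show ?thesis .
qed

definition Ecols where "Ecols = {j. oc < j \<and> j \<le> n \<and> (\<exists>i. k < i \<and> i < r \<and> A i j = 1)}"

lemma charge_card: "charge n A = int (card Ecols)"
proof -
  have "charge n A = (\<Sum>i\<in>{k<..<r}. \<Sum>j\<in>{oc<..n}. A i j)" unfolding charge_def cr oco orw by simp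
  also have "\<dots> = (\<Sum>j\<in>{oc<..n}. \<Sum>i\<in>{k<..<r}. A i j)" by (rule sum.swap)
  also have "\<dots> = (\<Sum>j\<in>{oc<..n}. if j \<in> Ecols then 1 else 0)"
  proof (rule sum.cong[OF refl])
    fix j assume j: "j \<in> {oc<..n}"
    then have jo: "j \<noteq> oc" "1 \<le> j" "j \<le> n" using s by auto
    obtain g where g: "A g j = 1" using s1_col[OF S, of j] jo by blast
    have "(\<Sum>i\<in>{k<..<r}. A i j) = (if g \<in> {k<..<r} then 1 else 0)" by (rule colsum_reg[OF jo(1) g]) simp
    moreover have "g \<in> {k<..<r} \<longleftrightarrow> j \<in> Ecols"
    proof
      assume "g \<in> {k<..<r}" then show "j \<in> Ecols" using j g unfolding Ecols_def by auto
    next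
      assume "j \<in> Ecols"
      then obtain i where "k < i" "i < r" "A i j = 1" unfolding Ecols_def by blast
      then have "i = g" using colu[OF jo(1)] g by blast
      then show "g \<in> {k<..<r}" using \<open>k < i\<close> \<open>i < r\<close> by simp
    qed
    ultimately show "(\<Sum>i\<in>{k<..<r}. A i j) = (if j \<in> Ecols then 1 else 0)" by simp
  qed
  also have "\<dots> = int (card ({oc<..n} \<inter> Ecols))"
    by (simp add: sum.inter_restrict[symmetric])
  also have "{oc<..n} \<inter> Ecols = Ecols" unfolding Ecols_def by auto
  finally show ?thesis .
qed

lemma NF:
  assumes rk: "r = k + 1"
  shows "PF i j = (if r < i \<and> i \<le> n \<and> oc \<le> j \<and> j \<le> cc then
      (if (j \<in> SS \<or> j = cc) \<and> oc < j then A i (prv SS j) else 0)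
    else if i = r \<and> (j = oc \<or> j = cc) then 0 else A i j)"
proof -
  have TT1: "TT = {r}" using rTT TTb rk by fastforce
  have nk: "nxt TT k = r"
  proof -
    have "k \<le> k" "k < r" using s by auto
    from nT[OF this] show ?thesis using TT1 by auto
  qed
  consider "1 \<le> j \<and> j < oc \<and> k \<le> i \<and> i \<le> r" | "oc < j \<and> j \<le> n \<and> k + 1 \<le> i \<and> i \<le> r"
    | "r < i \<and> i \<le> n \<and> oc \<le> j \<and> j \<le> cc"
    | "\<not> (1 \<le> j \<and> j < oc \<and> k \<le> i \<and> i \<le> r)" "\<not> (oc < j \<and> j \<le> n \<and> k + 1 \<le> i \<and> i \<le> r)"
      "\<not> (r < i \<and> i \<le> n \<and> oc \<le> j \<and> j \<le> cc)" by blast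
  then show ?thesis
  proof cases
    case 1
    show ?thesis
    proof (cases "i = k")
      case True
      then show ?thesis using PF_Lk[of j] 1 rowk[of j] s by auto
    next
      case False
      then have ir: "i = r" using 1 rk by auto
      have "PF i j = A (nxt TT k) j" using PF_L[of j i] 1 ir rk by simp
      then show ?thesis using nk ir 1 s by auto
    qed
  next
    case 2
    then have ir: "i = k + 1" using rk by auto
    have "PF i j = 0" using PF_Rk1[of j] 2 ir by simp
    moreover have "A r j = 0" if "j \<noteq> cc" using s1_rowr[OF S, of j] 2 s that by auto
    ultimately show ?thesis using 2 ir rk by auto
  next
    case 3
    then show ?thesis using PF_H[of i j] by simp
  next
    case 4
    then show ?thesis unfolding PF_O[OF 4] by (simp only: if_not_P[OF 4(3)] if_False)
  qed
qed

end


context sA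
begin

lemma PF_colH':
  assumes "j \<in> insert cc SS" "oc < j"
  shows "\<exists>i. r < i \<and> PF i j = 1"
proof -
  have jc: "j \<le> cc"
  proof (cases "j = cc")
    case False
    then have "j \<in> SS" using assms(1) by blast
    then show ?thesis using SSb[of j] by simp
  qed simp
  have pS: "prv SS j \<in> SS" "nxt (insert cc SS) (prv SS j) = j" using G.GL2[OF assms(1) assms(2) jc] by auto
  then obtain i where i: "r < i" "A i (prv SS j) = 1" using SS_iff by blast
  have "i \<le> n" using one_in[OF i(2)] by simp
  then have "PF i j = 1" using PF_Hn[OF pS(1) i(1)] pS(2) i(2) by simp
  then show ?thesis using i(1) by blast
qed

lemma dec_oc_PF: "dec_oc PF k = oc"
  unfolding dec_oc_def by (rule the_equality) (auto simp: PF_k split: if_splits)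

lemma U_iff:
  assumes rk: "r = k + 1" and u: "oc < u" "u \<le> cc"
  shows "u \<in> decU n PF k oc \<longleftrightarrow> u \<in> SS \<or> u = cc"
proof
  assume "u \<in> decU n PF k oc"
  then obtain i where i: "k + 1 < i" "PF i u = 1" unfolding decU_def by blast
  have "i \<le> n" using PF_zero_out[of i u] i(2) by fastforce
  then have "PF i u = (if (u \<in> SS \<or> u = cc) \<and> oc < u then A i (prv SS u) else 0)"
    using PF_H[of i u] i rk u by simp
  then show "u \<in> SS \<or> u = cc" using i(2) by (auto split: if_splits)
next
  assume "u \<in> SS \<or> u = cc"
  then obtain i where "r < i" "PF i u = 1" using PF_colH'[of u] u by blast
  then show "u \<in> decU n PF k oc" unfolding decU_def using u s rk by auto
qed

lemma GLU:
  assumes rk: "r = k + 1"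
  shows "GLs SS (decU n PF k oc) oc cc"
  by unfold_locales (use ocSS SSb U_iff[OF rk] in auto)

lemma D2:
  assumes rk: "r = k + 1"
  shows "decode n k PF (nat (cval n A)) = A"
proof -
  let ?U = "decU n PF k oc"
  interpret GU: GLs SS ?U oc cc by (rule GLU[OF rk])
  have ccU: "cc \<in> ?U" using U_iff[OF rk, of cc] s by simp
  have Ub: "u \<in> ?U \<Longrightarrow> oc < u" for u unfolding decU_def by simp
  have "{x\<in>?U. x<cc} = {j\<in>SS. oc < j}"
  proof
    show "{x\<in>?U. x<cc} \<subseteq> {j\<in>SS. oc < j}" using U_iff[OF rk] Ub by fastforce
    show "{j\<in>SS. oc < j} \<subseteq> {x\<in>?U. x<cc}" using U_iff[OF rk] SSb by fastforce
  qed
  then have cd: "card {x\<in>?U. x<cc} = nat (cval n A)" using cval_card by simp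
  have e: "nth_el ?U (nat (cval n A)) = cc" by (rule nth_el_eq[OF decU_fin ccU cd])
  show ?thesis
  proof (rule ext, rule ext)
    fix i j
    have D: "decode n k PF (nat (cval n A)) i j =
      (if k + 1 < i \<and> i \<le> n \<and> oc \<le> j \<and> j \<le> cc then
              (if j = oc \<or> (j \<in> ?U \<and> j < cc) then PF i (nxt ?U j) else 0)
           else if i = k + 1 \<and> j = oc then -1
           else if i = k + 1 \<and> j = cc then 1 else PF i j)"
      unfolding decode_def Let_def dec_oc_PF e by simp
    show "decode n k PF (nat (cval n A)) i j = A i j"
    proof (cases "k + 1 < i \<and> i \<le> n \<and> oc \<le> j \<and> j \<le> cc")
      case B: True
      show ?thesis
      proof (cases "j = oc \<or> (j \<in> ?U \<and> j < cc)")
        case True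
        have jS: "j \<in> SS"
        proof (cases "j = oc")
          case False
          then have "j \<in> ?U" "j < cc" using True by auto
          then show ?thesis using U_iff[OF rk, of j] Ub by auto
        qed (use ocSS in simp)
        note g = GU.GL1[OF jS]
        have "oc < nxt ?U j" using g(2) SSb[OF jS] by simp
        then have "nxt ?U j \<in> SS \<or> nxt ?U j = cc" using U_iff[OF rk] g by blast
        then have "PF i (nxt ?U j) = A i (prv SS (nxt ?U j))"
          using PF_H[of i "nxt ?U j"] B rk g \<open>oc < nxt ?U j\<close> by simp
        then show ?thesis unfolding D using B True g(4) by simp
      next
        case False
        have jS: "j \<notin> SS"
        proof
          assume "j \<in> SS"
          then have "j \<noteq> oc" "j < cc" using False SSb by auto
          then have "oc < j" using B by simp
          then have "j \<in> ?U" using U_iff[OF rk, of j] \<open>j \<in> SS\<close> \<open>j < cc\<close> by simp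
          then show False using False \<open>j < cc\<close> by simp
        qed
        have "A i j = 0"
        proof (rule ccontr)
          assume "A i j \<noteq> 0"
          then have "A i j = 1" using nz1[of i j] B rk by auto
          then show False using jS SS_iff B rk by auto
        qed
        moreover have "decode n k PF (nat (cval n A)) i j = 0"
          unfolding D by (simp only: if_P[OF B] if_not_P[OF False])
        ultimately show ?thesis by simp
      qed
    next
      case NB: False
      have NB': "\<not> (r < i \<and> i \<le> n \<and> oc \<le> j \<and> j \<le> cc)" using NB rk by simp
      have P: "PF i j = (if i = r \<and> (j = oc \<or> j = cc) then 0 else A i j)"
        unfolding NF[OF rk] by (simp only: if_not_P[OF NB'] if_False)
      show ?thesis unfolding D using NB P s rk by auto
    qed
  qed
qed

end


locale dP =
  fixes n k :: nat and P :: mat and c oo a :: nat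
  assumes perm: "perm01 n P" and k1: "1 \<le> k" and Po: "P k oo = 1" and Pa: "P (k+1) a = 1"
    and a1: "1 \<le> a" and ao: "a < oo" and cU: "c < card (decU n P k oo)"
begin

abbreviation "U \<equiv> decU n P k oo"
definition e where "e = nth_el U c"
definition X where "X = insert oo {u\<in>U. u < e}"
definition N where "N = decode n k P c"

lemma pv: "P i j = 0 \<or> P i j = 1" using perm unfolding perm01_def by blast
lemma pout: "\<not>(1\<le>i \<and> i\<le>n \<and> 1\<le>j \<and> j\<le>n) \<Longrightarrow> P i j = 0" using perm unfolding perm01_def by blast
lemma prow: "1\<le>i \<Longrightarrow> i\<le>n \<Longrightarrow> \<exists>j. P i j = 1" using perm unfolding perm01_def by blast
lemma prowu: "P i j1 = 1 \<Longrightarrow> P i j2 = 1 \<Longrightarrow> j1 = j2" using perm unfolding perm01_def by blast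
lemma pcol: "1\<le>j \<Longrightarrow> j\<le>n \<Longrightarrow> \<exists>i. P i j = 1" using perm unfolding perm01_def by blast
lemma pcolu: "P i1 j = 1 \<Longrightarrow> P i2 j = 1 \<Longrightarrow> i1 = i2" using perm unfolding perm01_def by blast
lemma p0: "P i j \<noteq> 1 \<Longrightarrow> P i j = 0" using pv by blast
lemma pin: "P i j = 1 \<Longrightarrow> 1\<le>i \<and> i\<le>n \<and> 1\<le>j \<and> j\<le>n" using pout[of i j] by fastforce

lemma dec_oc_P: "dec_oc P k = oo"
  unfolding dec_oc_def by (rule the_equality) (use Po prowu in auto)

lemma U_iff: "u \<in> U \<longleftrightarrow> oo < u \<and> u \<le> n \<and> (\<exists>i. k + 1 < i \<and> P i u = 1)"
  unfolding decU_def by simp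

lemma e_prop: "e \<in> U" "card {x\<in>U. x < e} = c"
  using nth_el_prop[OF decU_fin cU] unfolding e_def by auto

lemma oe: "oo < e" "e \<le> n" using e_prop U_iff by auto

lemma kn: "k + 1 < n" "1 \<le> oo"
proof -
  obtain i where "k + 1 < i" "P i e = 1" using e_prop U_iff by blast
  then show "k + 1 < n" using pin by fastforce
  show "1 \<le> oo" using a1 ao by simp
qed

lemma Ucol: "u \<in> U \<Longrightarrow> P i u = 1 \<Longrightarrow> k + 1 < i"
proof -
  assume u: "u \<in> U" "P i u = 1"
  then obtain g where "k + 1 < g" "P g u = 1" using U_iff by blast
  then show "k + 1 < i" using pcolu[OF u(2)] by simp
qed

lemma GLX: "GLs X U oo e"
proof
  show "oo \<in> X" unfolding X_def by simp
next
  fix s assume "s \<in> X"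
  then have "s = oo \<or> (s \<in> U \<and> s < e)" unfolding X_def by blast
  then show "oo \<le> s \<and> s < e"
  proof
    assume "s = oo" then show ?thesis using oe by simp
  next
    assume "s \<in> U \<and> s < e" then show ?thesis unfolding U_iff by simp
  qed
next
  fix u assume u: "oo < u" "u \<le> e"
  show "(u \<in> U) = (u \<in> X \<or> u = e)"
  proof
    assume "u \<in> U"
    then show "u \<in> X \<or> u = e" unfolding X_def using u by (cases "u = e") auto
  next
    assume "u \<in> X \<or> u = e"
    then show "u \<in> U" unfolding X_def using u e_prop(1) by blast
  qed
qed

interpretation GX: GLs X U oo e by (rule GLX)

lemma XU: "j \<in> X \<Longrightarrow> j \<noteq> oo \<Longrightarrow> j \<in> U \<and> j < e" unfolding X_def by auto

lemma N_eq: "N i j = (if k + 1 < i \<and> i \<le> n \<and> oo \<le> j \<and> j \<le> e then (if j \<in> X then P i (nxt U j) else 0)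
   else if i = k + 1 \<and> j = oo then -1 else if i = k + 1 \<and> j = e then 1 else P i j)"
proof -
  have "(j = oo \<or> (j \<in> U \<and> j < e)) = (j \<in> X)" unfolding X_def by auto
  then show ?thesis unfolding N_def decode_def Let_def dec_oc_P e_def[symmetric] by simp
qed

lemma N_blk: "k + 1 < i \<Longrightarrow> i \<le> n \<Longrightarrow> oo \<le> j \<Longrightarrow> j \<le> e \<Longrightarrow> N i j = (if j \<in> X then P i (nxt U j) else 0)"
  using N_eq[of i j] by simp

lemma N_nb: assumes "\<not> (k + 1 < i \<and> i \<le> n \<and> oo \<le> j \<and> j \<le> e)" "\<not> (i = k + 1 \<and> j = oo)" "\<not> (i = k + 1 \<and> j = e)"
  shows "N i j = P i j"
  unfolding N_eq by (simp only: if_not_P[OF assms(1)] if_not_P[OF assms(2)] if_not_P[OF assms(3)])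

lemma N_left: "j < oo \<Longrightarrow> N i j = P i j"
  by (rule N_nb) (use oe in auto)

definition u1 where "u1 = nxt U oo"
lemma u1: "u1 \<in> U" "oo < u1" "u1 \<le> e" "prv X u1 = oo"
  using GX.GL1[OF GX.mX] unfolding u1_def by auto

definition dd where "dd = (THE i. P i u1 = 1)"
lemma dd: "P dd u1 = 1" "k + 1 < dd" "dd \<le> n"
proof -
  obtain g where g: "P g u1 = 1" using u1(1) U_iff by blast
  have "\<exists>!i. P i u1 = 1" using g pcolu by blast
  then show ddp: "P dd u1 = 1" unfolding dd_def by (rule theI')
  show "k + 1 < dd" using Ucol[OF u1(1) ddp] .
  show "dd \<le> n" using pin[OF ddp] by simp
qed

lemma Nk1: "N (k+1) oo = -1" "N (k+1) a = 1" "N (k+1) e = 1" "N k oo = 1" "N dd oo = 1"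
proof -
  show "N (k+1) oo = -1" using N_eq[of "k+1" oo] by simp
  show "N (k+1) a = 1" using N_left[of a] ao Pa by simp
  show "N (k+1) e = 1" using N_eq[of "k+1" e] oe by simp
  show "N k oo = 1" using N_eq[of k oo] Po by simp
  have "N dd oo = P dd (nxt U oo)" using N_blk[of dd oo] dd oe unfolding X_def by simp
  then show "N dd oo = 1" using dd(1) unfolding u1_def by simp
qed

lemma out_N: "\<not>(1\<le>i \<and> i\<le>n \<and> 1\<le>j \<and> j\<le>n) \<Longrightarrow> N i j = 0"
proof -
  assume a: "\<not>(1\<le>i \<and> i\<le>n \<and> 1\<le>j \<and> j\<le>n)"
  have "\<not> (k + 1 < i \<and> i \<le> n \<and> oo \<le> j \<and> j \<le> e)" "\<not> (i = k + 1 \<and> j = oo)" "\<not> (i = k + 1 \<and> j = e)"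
    using a kn oe by auto
  then show ?thesis using N_nb pout[OF a] by simp
qed

lemma rowk1_N: "j \<noteq> a \<Longrightarrow> j \<noteq> oo \<Longrightarrow> j \<noteq> e \<Longrightarrow> N (k+1) j = 0"
proof -
  assume a: "j \<noteq> a" "j \<noteq> oo" "j \<noteq> e"
  have "N (k+1) j = P (k+1) j" by (rule N_nb) (use a in auto)
  moreover have "P (k+1) j \<noteq> 1" using prowu[OF Pa] a by blast
  ultimately show ?thesis using p0 by simp
qed

lemma colo_N: "i \<noteq> k \<Longrightarrow> i \<noteq> k + 1 \<Longrightarrow> i \<noteq> dd \<Longrightarrow> N i oo = 0"
proof -
  assume a: "i \<noteq> k" "i \<noteq> k + 1" "i \<noteq> dd"
  show ?thesis
  proof (cases "k + 1 < i \<and> i \<le> n")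
    case True
    have "N i oo = P i (nxt U oo)" using N_blk[of i oo] True oe unfolding X_def by simp
    moreover have "P i u1 \<noteq> 1" using pcolu[OF dd(1)] a by blast
    ultimately show ?thesis using p0 unfolding u1_def by simp
  next
    case False
    have "N i oo = P i oo" by (rule N_nb) (use False a in auto)
    moreover have "P i oo \<noteq> 1" using pcolu[OF Po] a by blast
    ultimately show ?thesis using p0 by simp
  qed
qed

lemma row_N:
  assumes i: "1 \<le> i" "i \<le> n" "i \<noteq> k + 1"
  shows "\<exists>j. N i j = 1 \<and> (\<forall>j'. j' \<noteq> j \<longrightarrow> N i j' = 0)"
proof (cases "k + 1 < i")
  case False
  then have eq: "N i j = P i j" for j by (intro N_nb) (use i in auto)
  obtain f where f: "P i f = 1" using prow i by blast
  show ?thesis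
  proof (intro exI[of _ f] conjI allI impI)
    show "N i f = 1" using eq f by simp
    fix j' assume "j' \<noteq> f"
    then have "P i j' \<noteq> 1" using prowu[OF f] by blast
    then show "N i j' = 0" using eq[of j'] p0 by simp
  qed
next
  case True
  obtain f where f: "P i f = 1" using prow i by blast
  have fo: "f \<noteq> oo" using pcolu[OF Po] f True by auto
  have blkzero: "N i j' = 0" if "oo \<le> j'" "j' \<le> e" "j' \<in> X \<Longrightarrow> nxt U j' \<noteq> f" for j'
  proof -
    have "N i j' = (if j' \<in> X then P i (nxt U j') else 0)" using N_blk[of i j'] True i that by simp
    then show ?thesis using prowu[OF f] p0 that by (cases "j' \<in> X") auto
  qed
  show ?thesis
  proof (cases "oo < f \<and> f \<le> e")
    case fin: True
    have fU: "f \<in> U" using U_iff f True fin pin[OF f] by auto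
    note g2 = GX.GL2[OF fU] 
    let ?p = "prv X f"
    have pX: "?p \<in> X" "?p < f" "nxt U ?p = f" using g2 fin by auto
    have po: "oo \<le> ?p" using GX.Xb[OF pX(1)] by simp
    show ?thesis
    proof (intro exI[of _ ?p] conjI allI impI)
      show "N i ?p = 1" using N_blk[of i ?p] True i po pX fin f by simp
      fix j' assume j': "j' \<noteq> ?p"
      show "N i j' = 0"
      proof (cases "oo \<le> j' \<and> j' \<le> e")
        case True
        have "nxt U j' \<noteq> f" if "j' \<in> X"
        proof
          assume "nxt U j' = f"
          then have "prv X (nxt U j') = prv X f" by simp
          then show False using GX.GL1(4)[OF that] j' by simp
        qed
        then show ?thesis using blkzero True by blast
      next
        case False
        have "N i j' = P i j'" by (rule N_nb) (use False \<open>k+1 < i\<close> in auto)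
        moreover have "j' \<noteq> f" using False fin by auto
        then have "P i j' \<noteq> 1" using prowu[OF f] by blast
        ultimately show ?thesis using p0 by simp
      qed
    qed
  next
    case fout: False
    have ff: "\<not> (oo \<le> f \<and> f \<le> e)" using fout fo by auto
    show ?thesis
    proof (intro exI[of _ f] conjI allI impI)
      show "N i f = 1" using N_nb[of i f] ff True f by simp
      fix j' assume j': "j' \<noteq> f"
      show "N i j' = 0"
      proof (cases "oo \<le> j' \<and> j' \<le> e")
        case True
        have "nxt U j' \<noteq> f" if "j' \<in> X"
        proof -
          have "j' < nxt U j'" "nxt U j' \<le> e" using GX.GL1[OF that] by auto
          then show ?thesis using True ff by auto
        qed
        then show ?thesis using blkzero True by blast
      next
        case False
        have "N i j' = P i j'" by (rule N_nb) (use False \<open>k+1 < i\<close> in auto)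
        moreover have "P i j' \<noteq> 1" using prowu[OF f] j' by blast
        ultimately show ?thesis using p0 by simp
      qed
    qed
  qed
qed


lemma col_N:
  assumes j: "1 \<le> j" "j \<le> n" "j \<noteq> oo"
  shows "\<exists>i. N i j = 1 \<and> (\<forall>i'. i' \<noteq> i \<longrightarrow> N i' j = 0)"
proof (cases "j < oo \<or> e < j")
  case True
  then have eq: "N i j = P i j" for i by (intro N_nb) (use oe in auto)
  obtain g where g: "P g j = 1" using pcol j by blast
  show ?thesis
  proof (intro exI[of _ g] conjI allI impI)
    show "N g j = 1" using eq g by simp
    fix i' assume "i' \<noteq> g"
    then have "P i' j \<noteq> 1" using pcolu[OF g] by blast
    then show "N i' j = 0" using eq p0 by simp
  qed
next
  case F: False
  show ?thesis
  proof (cases "j = e")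
    case True
    show ?thesis
    proof (intro exI[of _ "k+1"] conjI allI impI)
      show "N (k+1) j = 1" using Nk1 True by simp
      fix i' assume i': "i' \<noteq> k + 1"
      show "N i' j = 0"
      proof (cases "k + 1 < i' \<and> i' \<le> n")
        case True
        have "j \<notin> X" unfolding X_def using \<open>j = e\<close> oe by auto
        then show ?thesis using N_blk[of i' j] True \<open>j = e\<close> oe by simp
      next
        case False
        have "N i' j = P i' j" by (rule N_nb) (use False i' in auto)
        moreover have "P i' j \<noteq> 1"
        proof
          assume "P i' j = 1"
          then have "k + 1 < i'" using Ucol e_prop \<open>j = e\<close> by blast
          then show False using False pin[OF \<open>P i' j = 1\<close>] by simp
        qed
        ultimately show ?thesis using p0 by simp
      qed
    qed
  next
    case jne: False
    have jr: "oo < j" "j < e" using F jne j by auto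
    show ?thesis
    proof (cases "j \<in> U")
      case True
      have jX: "j \<in> X" unfolding X_def using True jr by simp
      note g1 = GX.GL1[OF jX]
      obtain g where g: "P g (nxt U j) = 1" using g1(1) U_iff by blast
      have gk: "k + 1 < g" "g \<le> n" using Ucol[OF g1(1) g] pin[OF g] by auto
      show ?thesis
      proof (intro exI[of _ g] conjI allI impI)
        show "N g j = 1" using N_blk[of g j] gk jr jX g by simp
        fix i' assume i': "i' \<noteq> g"
        show "N i' j = 0"
        proof (cases "k + 1 < i' \<and> i' \<le> n")
          case True
          have "N i' j = P i' (nxt U j)" using N_blk[of i' j] True jr jX by simp
          moreover have "P i' (nxt U j) \<noteq> 1" using pcolu[OF g] i' by blast
          ultimately show ?thesis using p0 by simp
        next
          case False
          have "N i' j = P i' j" by (rule N_nb) (use False jr in auto)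
          moreover have "P i' j \<noteq> 1"
          proof
            assume "P i' j = 1"
            then have "k + 1 < i'" using Ucol True by blast
            then show False using False pin[OF \<open>P i' j = 1\<close>] by simp
          qed
          ultimately show ?thesis using p0 by simp
        qed
      qed
    next
      case False
      have jX: "j \<notin> X" unfolding X_def using False jr by auto
      obtain h where h: "P h j = 1" using pcol j by blast
      have hk: "h \<le> k + 1"
      proof (rule ccontr)
        assume "\<not> h \<le> k + 1"
        then have "k + 1 < h" by simp
        then have "j \<in> U" unfolding U_iff using h jr j by blast
        then show False using False by simp
      qed
      show ?thesis
      proof (intro exI[of _ h] conjI allI impI)
        show "N h j = 1" using N_nb[of h j] hk jr h by simp
        fix i' assume i': "i' \<noteq> h"
        show "N i' j = 0"
        proof (cases "k + 1 < i' \<and> i' \<le> n")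
          case True
          then show ?thesis using N_blk[of i' j] jr jX by simp
        next
          case False
          have "N i' j = P i' j" by (rule N_nb) (use False jr in auto)
          moreover have "P i' j \<noteq> 1" using pcolu[OF h] i' by blast
          ultimately show ?thesis using p0 by simp
        qed
      qed
    qed
  qed
qed

lemma N_struct: "struct1 n N k (k+1) oo a e dd"
proof -
  have f1: "1 \<le> k \<and> k < k+1 \<and> k+1 < dd \<and> dd \<le> n \<and> 1 \<le> a \<and> a < oo \<and> oo < e \<and> e \<le> n"
    using k1 dd a1 ao oe by simp
  have f2: "\<forall>i j. \<not>(1\<le>i \<and> i\<le>n \<and> 1\<le>j \<and> j\<le>n) \<longrightarrow> N i j = 0" using out_N by blast
  have f3: "\<forall>j. j\<noteq>a \<and> j\<noteq>oo \<and> j\<noteq>e \<longrightarrow> N (k+1) j = 0" using rowk1_N by blast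
  have f4: "\<forall>i. i\<noteq>k \<and> i\<noteq>k+1 \<and> i\<noteq>dd \<longrightarrow> N i oo = 0" using colo_N by blast
  have f5: "\<forall>i. 1\<le>i \<and> i\<le>n \<and> i\<noteq>k+1 \<longrightarrow> (\<exists>j. N i j = 1 \<and> (\<forall>j'. j'\<noteq>j \<longrightarrow> N i j' = 0))"
    using row_N by blast
  have f6: "\<forall>j. 1\<le>j \<and> j\<le>n \<and> j\<noteq>oo \<longrightarrow> (\<exists>i. N i j = 1 \<and> (\<forall>i'. i'\<noteq>i \<longrightarrow> N i' j = 0))"
    using col_N by blast
  show ?thesis unfolding struct1_def using f1 f2 f3 f4 f5 f6 Nk1 by blast
qed

interpretation NA: sA n N k "k+1" oo a e dd by unfold_locales (rule N_struct)

lemma SS_N: "NA.SS = X"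
proof
  show "NA.SS \<subseteq> X"
  proof
    fix j assume "j \<in> NA.SS"
    then obtain i where i: "oo \<le> j" "j \<le> e" "k + 1 < i" "N i j = 1" using NA.SS_iff by blast
    have "i \<le> n" using NA.one_in[OF i(4)] by simp
    then show "j \<in> X" using N_blk[of i j] i by (auto split: if_splits)
  qed
next
  show "X \<subseteq> NA.SS"
  proof
    fix j assume jX: "j \<in> X"
    note g1 = GX.GL1[OF jX]
    obtain g where g: "P g (nxt U j) = 1" using g1(1) U_iff by blast
    have gk: "k + 1 < g" "g \<le> n" using Ucol[OF g1(1) g] pin[OF g] by auto
    have jb: "oo \<le> j" "j < e" using GX.Xb[OF jX] by auto
    have "N g j = 1" using N_blk[of g j] gk jb jX g by simp
    then show "j \<in> NA.SS" using NA.SS_iff jb gk by auto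
  qed
qed

lemma delta_N: "delta n N = P"
proof (rule ext, rule ext)
  fix i j
  have rk: "k + 1 = k + 1" by simp
  show "delta n N i j = P i j"
  proof (cases "k + 1 < i \<and> i \<le> n \<and> oo \<le> j \<and> j \<le> e")
    case B: True
    have D: "delta n N i j = (if (j \<in> X \<or> j = e) \<and> oo < j then N i (prv X j) else 0)"
      unfolding NA.delta_PF NA.NF[OF rk] SS_N using B by simp
    show ?thesis
    proof (cases "(j \<in> X \<or> j = e) \<and> oo < j")
      case True
      have jU: "j \<in> U" using GX.YX[of j] True B by blast
      note g2 = GX.GL2[OF jU _ ] 
      have p: "prv X j \<in> X" "prv X j < j" "nxt U (prv X j) = j" using GX.GL2[OF jU] True B by auto
      have "oo \<le> prv X j" using GX.Xb[OF p(1)] by simp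
      then have "N i (prv X j) = P i j" using N_blk[of i "prv X j"] B p by simp
      then show ?thesis using D True by simp
    next
      case False
      have "P i j \<noteq> 1"
      proof
        assume P1: "P i j = 1"
        show False
        proof (cases "j = oo")
          case True
          then show False using pcolu[OF Po] P1 B by auto
        next
          case False
          then have "j \<in> U" using U_iff P1 B oe by auto
          then have "j \<in> X \<or> j = e" using GX.YX[of j] B False by auto
          then show False using \<open>\<not> ((j \<in> X \<or> j = e) \<and> oo < j)\<close> B False by auto
        qed
      qed
      then show ?thesis using D False p0 by simp
    qed
  next
    case NB: False
    have NB': "\<not> (k + 1 < i \<and> i \<le> n \<and> oo \<le> j \<and> j \<le> e)" using NB by simp
    have D: "delta n N i j = (if i = k + 1 \<and> (j = oo \<or> j = e) then 0 else N i j)"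
      unfolding NA.delta_PF NA.NF[OF rk] by (simp only: if_not_P[OF NB'] if_False)
    show ?thesis
    proof (cases "i = k + 1 \<and> (j = oo \<or> j = e)")
      case True
      have "P (k+1) oo \<noteq> 1" using pcolu[OF Po] by fastforce
      moreover have "P (k+1) e \<noteq> 1" using Ucol[OF e_prop(1)] by fastforce
      ultimately show ?thesis using D True p0 by auto
    next
      case False
      have "N i j = P i j" by (rule N_nb) (use NB False in auto)
      moreover have "delta n N i j = N i j" unfolding D by (rule if_not_P[OF False])
      ultimately show ?thesis by simp
    qed
  qed
qed

lemma cval_N: "cval n N = int c"
proof -
  have "{j\<in>NA.SS. oo < j} = {x\<in>U. x < e}" unfolding SS_N X_def using U_iff by auto
  then show ?thesis using NA.cval_card e_prop(2) by simp
qed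

lemma N_asm1: "asm1 n N" by (rule struct1_asm1[OF N_struct])

lemma N_neutral: "neutral n N"
  unfolding neutral_def using N_asm1 NA.orw NA.cr by simp

lemma N_notpos: "\<not> positive n N"
  unfolding positive_def using NA.orw NA.cr by simp

lemma Epar_N: "Epar n N = 0"
  unfolding Epar_def using N_neutral N_notpos by simp

lemma orw_N: "opening_row N = k" by (rule NA.orw)

lemma ell_N: "ell n N = (\<Sum>i\<in>{k<..n}. \<Sum>j\<in>{a<..<oo}. P i j)"
proof -
  have rk: "k + 1 = k + 1" by simp
  have TT1: "NA.TT = {k+1}" using NA.rTT NA.TTb by fastforce
  have nk: "nxt NA.TT k = k + 1"
  proof -
    have "k \<le> k" "k < k + 1" by auto
    from NA.nT[OF this] show ?thesis using TT1 by auto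
  qed
  have lc: "leading_col N = a"
  proof -
    have l: "1 \<le> leading_col N" "leading_col N < oo" "N (k+1) (leading_col N) = 1"
      using NA.lead_col nk by auto
    then show ?thesis using NA.rowr1 oe by auto
  qed
  have "ell n N = (\<Sum>i\<in>{k<..n}. \<Sum>j\<in>{a<..<oo}. N i j)"
    unfolding ell_def NA.orw NA.oco lc by simp
  also have "\<dots> = (\<Sum>i\<in>{k<..n}. \<Sum>j\<in>{a<..<oo}. P i j)"
    by (intro sum.cong refl) (simp add: N_left)
  finally show ?thesis .
qed

end


lemma D2':
  assumes "struct1 n N k (k+1) oc b cc d"
  shows "decode n k (delta n N) (nat (cval n N)) = N"
proof -
  interpret sA n N k "k+1" oc b cc d by unfold_locales (rule assms)
  show ?thesis using D2 delta_PF by simp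
qed

context sA
begin

lemma pos_iff: "positive n A \<longleftrightarrow> Suc k < r \<and> (\<exists>j. oc < j \<and> j \<le> n \<and> A (r - 1) j = 1)"
  unfolding positive_def using struct1_asm1[OF S] orw cr oco by simp

lemma neu_iff: "neutral n A \<longleftrightarrow> Suc k = r"
  unfolding neutral_def using struct1_asm1[OF S] orw cr by simp

lemma Epar_pn:
  assumes "positive n A \<or> neutral n A"
  shows "Epar n A = int (card Ecols)"
proof (cases "positive n A")
  case True
  then show ?thesis unfolding Epar_def using charge_card by simp
next
  case False
  then have "neutral n A" using assms by simp
  then have "r = Suc k" using neu_iff by simp
  then have "Ecols = {}" unfolding Ecols_def by auto
  then show ?thesis unfolding Epar_def using False \<open>neutral n A\<close> by simp
qed

lemma pos_charge: "positive n A \<Longrightarrow> 0 < charge n A"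
proof -
  assume "positive n A"
  then obtain j where j: "Suc k < r" "oc < j" "j \<le> n" "A (r - 1) j = 1" using pos_iff by blast
  then have "j \<in> Ecols" unfolding Ecols_def by (intro CollectI conjI exI[of _ "r - 1"]) auto
  moreover have "finite Ecols" unfolding Ecols_def by (rule finite_subset[of _ "{..n}"]) auto
  ultimately have "card Ecols > 0" using card_gt_0_iff by blast
  then show ?thesis using charge_card by simp
qed

lemma ell_nonneg: "0 \<le> ell n A"
  unfolding ell_def oco by (intro sum_nonneg) (auto intro: ge0)

lemma card_bound:
  assumes "positive n A \<or> neutral n A"
  shows "card {j\<in>SS. oc < j} + card Ecols < card (decU n PF k oc)"
proof -
  let ?U = "decU n PF k oc"
  let ?f = "nxt (insert cc SS)"
  have finS: "finite SS" unfolding SS_def by auto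
  have finE: "finite Ecols" unfolding Ecols_def by (rule finite_subset[of _ "{..n}"]) auto
  have E_U: "Ecols \<subseteq> ?U"
  proof
    fix j assume "j \<in> Ecols"
    then obtain g where g: "oc < j" "j \<le> n" "k < g" "g < r" "A g j = 1" unfolding Ecols_def by blast
    have "PF (g+1) j = 1" using PF_Rs[of g j] g by simp
    then show "j \<in> ?U" unfolding decU_def using g by auto
  qed
  have F_U: "?f ` SS \<subseteq> ?U"
  proof
    fix v assume "v \<in> ?f ` SS"
    then obtain j where j: "j \<in> SS" "v = ?f j" by blast
    note g1 = G.GL1[OF j(1)]
    obtain i where i: "r < i" "A i j = 1" using SS_iff j(1) by blast
    have "i \<le> n" using one_in[OF i(2)] by simp
    then have "PF i v = 1" using PF_Hn[OF j(1) i(1)] i(2) j(2) by simp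
    moreover have "oc < v" "v \<le> n" using g1 j SSb[OF j(1)] s by auto
    moreover have "k + 1 < i" using i s by simp
    ultimately show "v \<in> ?U" unfolding decU_def by blast
  qed
  have inj: "inj_on ?f SS"
  proof (rule inj_onI)
    fix x y assume xy: "x \<in> SS" "y \<in> SS" "?f x = ?f y"
    have "x = prv SS (?f x)" using G.GL1(4)[OF xy(1)] by simp
    also have "\<dots> = prv SS (?f y)" using xy(3) by simp
    also have "\<dots> = y" using G.GL1(4)[OF xy(2)] by simp
    finally show "x = y" .
  qed
  have disj: "Ecols \<inter> ?f ` SS = {}"
  proof (rule ccontr)
    assume "Ecols \<inter> ?f ` SS \<noteq> {}"
    then obtain j v where jv: "j \<in> SS" "v = ?f j" "v \<in> Ecols" by blast
    then obtain g where g: "oc < v" "k < g" "g < r" "A g v = 1" unfolding Ecols_def by blast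
    have "v \<in> insert cc SS" using G.GL1(1)[OF jv(1)] jv(2) by simp
    then show False
    proof
      assume "v = cc"
      then show False using colcc[of g] g by simp
    next
      assume "v \<in> SS"
      then obtain i where "r < i" "A i v = 1" using SS_iff by blast
      then show False using colu[of v g i] g by auto
    qed
  qed
  have "card (Ecols \<union> ?f ` SS) = card Ecols + card SS"
    using card_Un_disjoint[OF finE finite_imageI[OF finS] disj] card_image[OF inj] by simp
  moreover have "card (Ecols \<union> ?f ` SS) \<le> card ?U"
    by (rule card_mono[OF decU_fin]) (use E_U F_U in blast)
  moreover have "card SS = Suc (card {j\<in>SS. oc < j})"
  proof -
    have "SS = insert oc {j\<in>SS. oc < j}"
    proof
      show "SS \<subseteq> insert oc {j\<in>SS. oc < j}"
      proof
        fix x assume "x \<in> SS"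
        then have "oc \<le> x" using SSb by blast
        then show "x \<in> insert oc {j\<in>SS. oc < j}" using \<open>x \<in> SS\<close> by (cases "x = oc") auto
      qed
      show "insert oc {j\<in>SS. oc < j} \<subseteq> SS" using ocSS by blast
    qed
    moreover have "finite {j\<in>SS. oc < j}" using finS by simp
    moreover have "oc \<notin> {j\<in>SS. oc < j}" by simp
    ultimately show ?thesis using card_insert_disjoint by metis
  qed
  ultimately show ?thesis by simp
qed

lemma ell_eq_sum: "ell n A = (\<Sum>i\<in>{k<..n}. \<Sum>j\<in>{leading_col A<..<oc}. A i j)"
  unfolding ell_def orw oco by simp

lemma col_lowsum:
  assumes j: "1 \<le> j" "j < oc"
  shows "(\<Sum>i\<in>{k<..n}. PF i j) = (\<Sum>i\<in>{k<..n}. A i j)"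
proof -
  have jn: "j \<le> n" "j \<noteq> oc" using j kn by auto
  obtain gA where gA: "A gA j = 1" using s1_col[OF S, of j] jn j by blast
  have perm: "perm01 n PF" by (rule PF_perm)
  obtain gP where gP: "PF gP j = 1" using perm jn j unfolding perm01_def by blast
  have pcolu: "\<And>i. PF i j = 1 \<Longrightarrow> i = gP" using perm gP unfolding perm01_def by blast
  have pv: "\<And>i. PF i j = 0 \<or> PF i j = 1" using perm unfolding perm01_def by blast
  have sA': "(\<Sum>i\<in>{k<..n}. A i j) = (if gA \<in> {k<..n} then 1 else 0)"
    by (rule colsum_reg[OF jn(2) gA]) simp
  have sP: "(\<Sum>i\<in>{k<..n}. PF i j) = (if gP \<in> {k<..n} then 1 else 0)"
  proof (rule sum_single[of _ "\<lambda>i. PF i j" gP])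
    fix i assume "i \<noteq> gP" then show "PF i j = 0" using pcolu pv by blast
  qed (use gP in auto)
  have gAn: "1 \<le> gA" "gA \<le> n" using one_in[OF gA] by auto
  have gPn: "gP \<le> n" using PF_zero_out[of gP j] gP by fastforce
  have gAk: "gA \<noteq> k" using rowk[of j] gA jn by auto
  have gPk: "gP \<noteq> k" using PF_k[of j] gP jn by auto
  have "gA \<le> k \<longleftrightarrow> gP \<le> k"
  proof
    assume "gA \<le> k"
    then have "gA < k" using gAk by simp
    then have "PF gA j = 1" using PF_low gA by simp
    then show "gP \<le> k" using pcolu \<open>gA < k\<close> by fastforce
  next
    assume "gP \<le> k"
    then have "gP < k" using gPk by simp
    then have "A gP j = 1" using PF_low gP by simp
    then show "gA \<le> k" using colu[OF jn(2) gA] \<open>gP < k\<close> by fastforce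
  qed
  then show ?thesis using sA' sP gAn gPn by auto
qed

end

lemma pn_main:
  assumes A: "asm1 n A" and pn: "positive n A \<or> neutral n A" and L: "Lambda_pn n A = (N, E)"
  shows "neutral n N \<and> ell n N = ell n A \<and> cval n N = cval n A + Epar n A \<and> E = Epar n A \<and>
     0 \<le> ell n A \<and> 0 \<le> cval n A \<and> 0 \<le> Epar n A"
proof -
  obtain k r oc b cc d where S: "struct1 n A k r oc b cc d" using asm1_struct[OF A] by blast
  interpret sA n A k r oc b cc d by unfold_locales (rule S)
  let ?c = "card {j\<in>SS. oc < j} + card Ecols"
  have cE: "cval n A + Epar n A = int ?c" using cval_card Epar_pn[OF pn] by simp
  have kr: "k < r" "k \<le> k" using s by auto
  note nk = nT[OF kr(2) kr(1)]
  note lc = lead_col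
  have Pa: "PF (k+1) (leading_col A) = 1" using PF_k1 lc by simp
  have Po: "PF k oc = 1" using PF_k by simp
  interpret D: dP n k PF ?c oc "leading_col A"
    by unfold_locales (use PF_perm s Po Pa lc card_bound[OF pn] in auto)
  have Pd: "delta n A = PF" by (rule delta_PF)
  have N0: "neutral n D.N" "opening_row D.N = k" "delta n D.N = PF" "cval n D.N = int ?c" "Epar n D.N = 0"
    using D.N_neutral D.orw_N D.delta_N D.cval_N D.Epar_N by auto
  have DA: "Delta n A = (k, PF, cval n A, Epar n A)" unfolding Delta_def orw Pd by simp
  have uniq: "N' = D.N" if N': "(positive n N' \<or> neutral n N') \<and> Delta n N' = (k, PF, cval n A + Epar n A, 0)" for N'
  proof -
    have A': "asm1 n N'" using N' unfolding positive_def neutral_def by blast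
    obtain k' r' oc' b' cc' d' where S': "struct1 n N' k' r' oc' b' cc' d'" using asm1_struct[OF A'] by blast
    interpret N'': sA n N' k' r' oc' b' cc' d' by unfold_locales (rule S')
    have dd: "opening_row N' = k" "delta n N' = PF" "cval n N' = cval n A + Epar n A" "Epar n N' = 0"
      using N' unfolding Delta_def by auto
    have kk: "k' = k" using dd(1) N''.orw by simp
    have "\<not> positive n N'"
    proof
      assume "positive n N'"
      then have "0 < charge n N'" by (rule N''.pos_charge)
      then show False using dd(4) \<open>positive n N'\<close> unfolding Epar_def by simp
    qed
    then have "neutral n N'" using N' by blast
    then have rr: "r' = k + 1" using N''.neu_iff kk by simp
    have "decode n k (delta n N') (nat (cval n N')) = N'" using D2' S' kk rr by simp
    moreover have "nat (cval n N') = ?c" using dd(3) cE by simp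
    ultimately have "N' = decode n k PF ?c" using dd(2) by simp
    then show ?thesis unfolding D.N_def by simp
  qed
  have ex: "(positive n D.N \<or> neutral n D.N) \<and> Delta n D.N = (k, PF, cval n A + Epar n A, 0)"
    using N0 cE unfolding Delta_def by simp
  have "(THE N. (positive n N \<or> neutral n N) \<and> Delta n N = (k, PF, cval n A + Epar n A, 0)) = D.N"
    by (rule the_equality[of "\<lambda>N. (positive n N \<or> neutral n N) \<and> Delta n N = (k, PF, cval n A + Epar n A, 0)", OF ex uniq])
  then have LA: "Lambda_pn n A = (D.N, Epar n A)" unfolding Lambda_pn_def DA by simp
  then have NE: "N = D.N" "E = Epar n A" using L by auto
  have ellA: "ell n A = (\<Sum>i\<in>{k<..n}. \<Sum>j\<in>{leading_col A<..<oc}. A i j)" by (rule ell_eq_sum)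
  have "ell n D.N = (\<Sum>i\<in>{k<..n}. \<Sum>j\<in>{leading_col A<..<oc}. PF i j)" by (rule D.ell_N)
  also have "\<dots> = (\<Sum>j\<in>{leading_col A<..<oc}. \<Sum>i\<in>{k<..n}. PF i j)" by (rule sum.swap)
  also have "\<dots> = (\<Sum>j\<in>{leading_col A<..<oc}. \<Sum>i\<in>{k<..n}. A i j)"
    by (rule sum.cong[OF refl], rule col_lowsum) (use lc in auto)
  also have "\<dots> = ell n A" unfolding ellA by (rule sum.swap)
  finally have ellN: "ell n D.N = ell n A" .
  have "0 \<le> cval n A" using cval_card by simp
  moreover have "0 \<le> Epar n A" using Epar_pn[OF pn] by simp
  ultimately show ?thesis using NE N0 ellN cE ell_nonneg by simp
qed


lemma refl_struct:
  assumes S: "struct1 n A k r oc b cc d"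
  shows "struct1 n (refl n A) k r (n+1-oc) (n+1-cc) (n+1-b) d"
proof -
  interpret sA n A k r oc b cc d by unfold_locales (rule S)
  let ?R = "refl n A"
  have R: "?R i j = (if 1 \<le> j \<and> j \<le> n then A i (n+1-j) else 0)" for i j by (simp add: refl_def)
  have f1: "1 \<le> k \<and> k < r \<and> r < d \<and> d \<le> n \<and> 1 \<le> n+1-cc \<and> n+1-cc < n+1-oc \<and> n+1-oc < n+1-b \<and> n+1-b \<le> n"
    using s by auto
  have f2: "\<forall>i j. \<not>(1\<le>i \<and> i\<le>n \<and> 1\<le>j \<and> j\<le>n) \<longrightarrow> ?R i j = 0"
  proof (intro allI impI)
    fix i j assume a: "\<not>(1\<le>i \<and> i\<le>n \<and> 1\<le>j \<and> j\<le>n)"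
    show "?R i j = 0"
    proof (cases "1 \<le> j \<and> j \<le> n")
      case True
      then have "\<not>(1\<le>i \<and> i\<le>n)" using a by simp
      then have "A i (n+1-j) = 0" using out[of i "n+1-j"] by blast
      then show ?thesis using True by (simp add: R)
    next
      case False
      show ?thesis unfolding R by (rule if_not_P[OF False])
    qed
  qed
  have vals: "?R r (n+1-oc) = -1" "?R r (n+1-cc) = 1" "?R r (n+1-b) = 1" "?R k (n+1-oc) = 1" "?R d (n+1-oc) = 1"
    using s R by auto
  have f3: "\<forall>j. j\<noteq>n+1-cc \<and> j\<noteq>n+1-oc \<and> j\<noteq>n+1-b \<longrightarrow> ?R r j = 0"
  proof (intro allI impI)
    fix j assume a: "j\<noteq>n+1-cc \<and> j\<noteq>n+1-oc \<and> j\<noteq>n+1-b"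
    show "?R r j = 0"
    proof (cases "1 \<le> j \<and> j \<le> n")
      case True
      have "n+1-j \<noteq> b" "n+1-j \<noteq> oc" "n+1-j \<noteq> cc" using a True s by auto
      then show ?thesis using R True s1_rowr[OF S] by simp
    next
      case False
      show ?thesis unfolding R by (rule if_not_P[OF False])
    qed
  qed
  have f4: "\<forall>i. i\<noteq>k \<and> i\<noteq>r \<and> i\<noteq>d \<longrightarrow> ?R i (n+1-oc) = 0"
    using R s s1_colo[OF S] by auto
  have f5: "\<forall>i. 1\<le>i \<and> i\<le>n \<and> i\<noteq>r \<longrightarrow> (\<exists>j. ?R i j = 1 \<and> (\<forall>j'. j'\<noteq>j \<longrightarrow> ?R i j' = 0))"
  proof (intro allI impI)
    fix i assume i: "1\<le>i \<and> i\<le>n \<and> i\<noteq>r"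
    obtain f where f: "A i f = 1" "\<forall>j'. j'\<noteq>f \<longrightarrow> A i j' = 0" using s1_row[OF S] i by blast
    have fn: "1 \<le> f" "f \<le> n" using one_in[OF f(1)] by auto
    have ff: "1 \<le> n+1-f" "n+1-f \<le> n" "n+1-(n+1-f) = f" using fn by arith+
    show "\<exists>j. ?R i j = 1 \<and> (\<forall>j'. j'\<noteq>j \<longrightarrow> ?R i j' = 0)"
    proof (intro exI[of _ "n+1-f"] conjI allI impI)
      show "?R i (n+1-f) = 1" unfolding R using ff f by simp
      fix j' assume j': "j' \<noteq> n+1-f"
      show "?R i j' = 0"
      proof (cases "1 \<le> j' \<and> j' \<le> n")
        case True
        then have "n+1-j' \<noteq> f" using j' by arith
        then show ?thesis unfolding R using True f(2) by simp
      next
        case False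
        show ?thesis unfolding R by (rule if_not_P[OF False])
      qed
    qed
  qed
  have f6: "\<forall>j. 1\<le>j \<and> j\<le>n \<and> j\<noteq>n+1-oc \<longrightarrow> (\<exists>i. ?R i j = 1 \<and> (\<forall>i'. i'\<noteq>i \<longrightarrow> ?R i' j = 0))"
  proof (intro allI impI)
    fix j assume j: "1\<le>j \<and> j\<le>n \<and> j\<noteq>n+1-oc"
    have "n+1-j \<noteq> oc" "1 \<le> n+1-j" "n+1-j \<le> n" using j s by auto
    then obtain g where g: "A g (n+1-j) = 1" "\<forall>i'. i'\<noteq>g \<longrightarrow> A i' (n+1-j) = 0" using s1_col[OF S] by blast
    have jr: "1 \<le> j \<and> j \<le> n" using j by simp
    show "\<exists>i. ?R i j = 1 \<and> (\<forall>i'. i'\<noteq>i \<longrightarrow> ?R i' j = 0)"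
    proof (intro exI[of _ g] conjI allI impI)
      show "?R g j = 1" unfolding R using jr g by simp
      fix i' assume "i' \<noteq> g"
      then show "?R i' j = 0" unfolding R using jr g by simp
    qed
  qed
  show ?thesis unfolding struct1_def using f1 f2 f3 f4 f5 f6 vals by blast
qed

lemma refl_refl:
  assumes "asm1 n A"
  shows "refl n (refl n A) = A"
proof (rule ext, rule ext)
  fix i j
  obtain k r oc b cc d where S: "struct1 n A k r oc b cc d" using asm1_struct[OF assms] by blast
  show "refl n (refl n A) i j = A i j"
    using s1_out[OF S, of i j] by (auto simp: refl_def)
qed

lemma sum_flip:
  fixes n oc cc :: nat
  assumes "cc \<le> n"
  shows "(\<Sum>j\<in>{n+1-cc<..<n+1-oc}. f (n+1-j)) = (\<Sum>j\<in>{oc<..<cc}. (f j :: int))"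
  by (rule sum.reindex_bij_witness[of _ "\<lambda>j. n+1-j" "\<lambda>j. n+1-j"]) (use assms in auto)

context sA
begin

lemma neutral_lc: "r = k + 1 \<Longrightarrow> leading_col A = b"
proof -
  assume rk: "r = k + 1"
  have TT1: "TT = {r}" using rTT TTb rk by fastforce
  have nk: "nxt TT k = r"
  proof -
    have "k \<le> k" "k < r" using s by auto
    from nT[OF this] show ?thesis using TT1 by auto
  qed
  have "1 \<le> leading_col A" "leading_col A < oc" "A r (leading_col A) = 1" using lead_col nk by auto
  then show ?thesis using rowr1 s by auto
qed

lemma neg_iff: "negative n A \<longleftrightarrow> Suc k < r \<and> (\<exists>j. 1 \<le> j \<and> j < oc \<and> A (r - 1) j = 1)"
  unfolding negative_def using struct1_asm1[OF S] orw cr oco by simp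

lemma trich: "positive n A \<or> neutral n A \<or> negative n A"
proof (cases "Suc k = r")
  case True then show ?thesis using neu_iff by simp
next
  case False
  then have kr: "Suc k < r" using s by simp
  have "1 \<le> r - 1" "r - 1 \<le> n" "r - 1 \<noteq> r" using s kr by auto
  then obtain f where f: "A (r-1) f = 1" using s1_row[OF S] by blast
  have "f \<noteq> oc" using colo1[of "r-1"] f kr s by auto
  moreover have "1 \<le> f" "f \<le> n" using one_in[OF f] by auto
  ultimately show ?thesis using pos_iff neg_iff kr f by (cases "f < oc") auto
qed

lemma neg_not: "negative n A \<Longrightarrow> \<not> positive n A"
proof -
  assume "negative n A"
  then obtain j where j: "Suc k < r" "1 \<le> j" "j < oc" "A (r-1) j = 1" using neg_iff by blast
  show "\<not> positive n A"
  proof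
    assume "positive n A"
    then obtain j' where "oc < j'" "A (r-1) j' = 1" using pos_iff by blast
    moreover have "r - 1 \<noteq> r" using j by arith
    ultimately show False using rowu[of "r-1" j j'] j by auto
  qed
qed

end

lemma neg_refl_pos:
  assumes A: "asm1 n A" and neg: "negative n A"
  shows "positive n (refl n A)" "asm1 n (refl n A)"
proof -
  obtain k r oc b cc d where S: "struct1 n A k r oc b cc d" using asm1_struct[OF A] by blast
  interpret sA n A k r oc b cc d by unfold_locales (rule S)
  have SR: "struct1 n (refl n A) k r (n+1-oc) (n+1-cc) (n+1-b) d" by (rule refl_struct[OF S])
  interpret R: sA n "refl n A" k r "n+1-oc" "n+1-cc" "n+1-b" d by unfold_locales (rule SR)
  obtain j where j: "Suc k < r" "1 \<le> j" "j < oc" "A (r - 1) j = 1" using neg neg_iff by blast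
  have jj: "1 \<le> n+1-j" "n+1-j \<le> n" "n+1-(n+1-j) = j" using j s by arith+
  have "refl n A (r-1) (n+1-j) = 1" using j jj by (simp add: refl_def)
  moreover have "n+1-oc < n+1-j" "n+1-j \<le> n" using j s by auto
  ultimately show "positive n (refl n A)" using R.pos_iff j by blast
  show "asm1 n (refl n A)" by (rule struct1_asm1[OF SR])
qed

lemma refl_neutral_vals:
  assumes M: "asm1 n M" "neutral n M"
  shows "ell n (refl n M) = cval n M" "cval n (refl n M) = ell n M"
proof -
  obtain k r oc b cc d where S: "struct1 n M k r oc b cc d" using asm1_struct[OF M(1)] by blast
  interpret sA n M k r oc b cc d by unfold_locales (rule S)
  have rk: "r = k + 1" using M(2) neu_iff by simp
  have SR: "struct1 n (refl n M) k r (n+1-oc) (n+1-cc) (n+1-b) d" by (rule refl_struct[OF S])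
  interpret R: sA n "refl n M" k r "n+1-oc" "n+1-cc" "n+1-b" d by unfold_locales (rule SR)
  have RR: "refl n M i j = (if 1 \<le> j \<and> j \<le> n then M i (n+1-j) else 0)" for i j by (simp add: refl_def)
  have split: "{k<..n} = insert r {r<..n}" using rk s by auto
  have row0: "M r j = 0" if "oc < j \<and> j < cc \<or> b < j \<and> j < oc" for j
  proof -
    have "j \<noteq> b" "j \<noteq> oc" "j \<noteq> cc" using that s by auto
    then show ?thesis by (rule s1_rowr[OF S])
  qed
  have "ell n (refl n M) = (\<Sum>i\<in>{k<..n}. \<Sum>j\<in>{n+1-cc<..<n+1-oc}. refl n M i j)"
    unfolding ell_def R.orw R.oco R.neutral_lc[OF rk] by simp
  also have "\<dots> = (\<Sum>i\<in>{k<..n}. \<Sum>j\<in>{n+1-cc<..<n+1-oc}. M i (n+1-j))"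
    by (intro sum.cong refl) (use s in \<open>auto simp: RR\<close>)
  also have "\<dots> = (\<Sum>i\<in>{k<..n}. \<Sum>j\<in>{oc<..<cc}. M i j)"
    by (intro sum.cong refl sum_flip) (use s in auto)
  also have "\<dots> = (\<Sum>i\<in>{r<..n}. \<Sum>j\<in>{oc<..<cc}. M i j)"
    unfolding split using row0 by simp
  also have "\<dots> = cval n M" unfolding cval_def cr oco ccl by simp
  finally show "ell n (refl n M) = cval n M" .
  have "cval n (refl n M) = (\<Sum>i\<in>{r<..n}. \<Sum>j\<in>{n+1-oc<..<n+1-b}. refl n M i j)"
    unfolding cval_def R.cr R.oco R.ccl by simp
  also have "\<dots> = (\<Sum>i\<in>{r<..n}. \<Sum>j\<in>{n+1-oc<..<n+1-b}. M i (n+1-j))"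
    by (intro sum.cong refl) (use s in \<open>auto simp: RR\<close>)
  also have "\<dots> = (\<Sum>i\<in>{r<..n}. \<Sum>j\<in>{b<..<oc}. M i j)"
    by (intro sum.cong refl sum_flip) (use s in auto)
  also have "\<dots> = (\<Sum>i\<in>{k<..n}. \<Sum>j\<in>{b<..<oc}. M i j)"
    unfolding split using row0 by simp
  also have "\<dots> = ell n M" unfolding ell_def orw oco neutral_lc[OF rk] by simp
  finally show "cval n (refl n M) = ell n M" .
qed

theorem lemma3:
  fixes n :: nat and A N :: mat and E :: int
  assumes "asm1 n A"
    and "Lambda n A = (N, E)"
  shows "- ell n N \<le> Bpar n A \<and> Bpar n A \<le> cval n N"
proof -
  obtain k r oc b cc d where S: "struct1 n A k r oc b cc d" using asm1_struct[OF assms(1)] by blast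
  interpret sA n A k r oc b cc d by unfold_locales (rule S)
  show ?thesis
  proof (cases "negative n A")
    case False
    then have pn: "positive n A \<or> neutral n A" using trich by blast
    have L: "Lambda_pn n A = (N, E)" using assms(2) False unfolding Lambda_def by simp
    have B: "Bpar n A = cval n A - ell n A" using False unfolding Bpar_def by simp
    from pn_main[OF assms(1) pn L] show ?thesis unfolding B by linarith
  next
    case True
    note RP = neg_refl_pos[OF assms(1) True]
    obtain M e where Me: "Lambda_pn n (refl n A) = (M, e)" by (cases "Lambda_pn n (refl n A)")
    have NE: "N = refl n M" "E = - e" using assms(2) True Me unfolding Lambda_def by auto
    note pm = pn_main[OF RP(2) _ Me]
    have pm': "neutral n M \<and> ell n M = ell n (refl n A) \<and> cval n M = cval n (refl n A) + Epar n (refl n A) \<and>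
     e = Epar n (refl n A) \<and> 0 \<le> ell n (refl n A) \<and> 0 \<le> cval n (refl n A) \<and> 0 \<le> Epar n (refl n A)"
      using pm RP(1) by blast
    have Masm: "asm1 n M" using pm' unfolding neutral_def by blast
    have v: "ell n N = cval n M" "cval n N = ell n M" using refl_neutral_vals[OF Masm] pm' NE by auto
    have B: "Bpar n A = - (cval n (refl n A) - ell n (refl n A))" using True unfolding Bpar_def by simp
    show ?thesis unfolding B v using pm' by linarith
  qed
qed


end
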